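(* Suppose $\mathcal{A}:S^{n\times n\times k}\to\mathbb{R}^m$ satisfies $\mathrm{RIP}(r+1,\delta_1)$ with $0<\delta_1<1$. Then $\mathcal{A}$ satisfies $\mathrm{S2SRIP}(r,\sqrt{kr}\,\delta_1)$, i.e. $\|(\mathcal{I}-\mathcal{A}^*\mathcal{A})(\bm{\mathcal{Z}})\|\le\sqrt{kr}\,\delta_1\|\bm{\mathcal{Z}}\|$ for all $\bm{\mathcal{Z}}\in S^{n\times n\times k}$ of tubal rank at most $r$.
   Context: Tensors are real $n\times n\times k$. Fourier slices $\overline{\bm{\mathcal{T}}}^{(j)}(i,i')=\sum_{j'}\bm{\mathcal{T}}(i,i',j')e^{-\sqrt{-1}\,2\pi(j-1)(j'-1)/k}$, $\overline{\bm{\mathcal{T}}}=\mathrm{blockdiag}(\overline{\bm{\mathcal{T}}}^{(j)})_j$; spectral norm $\|\bm{\mathcal{T}}\|=\|\overline{\bm{\mathcal{T}}}\|$. t-product: tube-wise circular convolution; transpose: transpose each frontal slice and reverse slices $2,\dots,k$; $S^{n\times n\times k}$: tubal-symmetric tensors ($\bm{\mathcal{T}}^\top=\bm{\mathcal{T}}$). Tubal rank: number of nonzero diagonal tubes of $\bm{\Sigma}$ in a t-SVD $\bm{\mathcal{T}}=\bm{\mathcal{U}}*\bm{\Sigma}*\bm{\mathcal{V}}^\top$. $\mathcal{A}(\bm{\mathcal{Z}})_i=\langle\bm{\mathcal{A}}_i,\bm{\mathcal{Z}}\rangle$ (entrywise inner product) with $\bm{\mathcal{A}}_i\in S^{n\times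 n\times k}$, $\mathcal{A}^*z=\sum_iz_i\bm{\mathcal{A}}_i$. $\mathrm{RIP}(s,\delta)$: $(1-\delta)\|\bm{\mathcal{Z}}\|_F^2\le\|\mathcal{A}(\bm{\mathcal{Z}})\|_2^2\le(1+\delta)\|\bm{\mathcal{Z}}\|_F^2$ for all $\bm{\mathcal{Z}}\in S^{n\times n\times k}$ of tubal rank $\le s$. $\mathrm{S2SRIP}(r,\delta)$: $\|(\mathcal{I}-\mathcal{A}^*\mathcal{A})(\bm{\mathcal{Z}})\|\le\delta\|\bm{\mathcal{Z}}\|$ for all $\bm{\mathcal{Z}}\in S^{n\times n\times k}$ of tubal rank $\le r$. *)

theory Defs
  imports Complex_Main
begin

text \<open>Tensors in R^(n x n x k) are represented as functions nat => nat => nat => real,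
  indexed from 0 (entry (i,i',j) with i,i' < n, j < k) and zero outside this range.\<close>

type_synonym tensor = "nat \<Rightarrow> nat \<Rightarrow> nat \<Rightarrow> real"

definition valid_tensor :: "nat \<Rightarrow> nat \<Rightarrow> tensor \<Rightarrow> bool" where
  "valid_tensor n k T \<longleftrightarrow> (\<forall>i i' j. \<not> (i < n \<and> i' < n \<and> j < k) \<longrightarrow> T i i' j = 0)"

definition tprod :: "nat \<Rightarrow> nat \<Rightarrow> tensor \<Rightarrow> tensor \<Rightarrow> tensor" where
  "tprod n k A B = (\<lambda>i l j. if i < n \<and> l < n \<and> j < k
      then (\<Sum>p<n. \<Sum>j'<k. A i p j' * B p l ((j + k - j') mod k)) else 0)"

text \<open>Transpose: transpose each frontal slice and reverse slices 2..k.\<close>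
definition ttrans :: "nat \<Rightarrow> nat \<Rightarrow> tensor \<Rightarrow> tensor" where
  "ttrans n k T = (\<lambda>i i' j. if i < n \<and> i' < n \<and> j < k then T i' i ((k - j) mod k) else 0)"

definition tid :: "nat \<Rightarrow> nat \<Rightarrow> tensor" where
  "tid n k = (\<lambda>i i' j. if i < n \<and> i = i' \<and> j = 0 \<and> j < k then 1 else 0)"

definition torth :: "nat \<Rightarrow> nat \<Rightarrow> tensor \<Rightarrow> bool" where
  "torth n k U \<longleftrightarrow> valid_tensor n k U \<and>
     tprod n k (ttrans n k U) U = tid n k \<and> tprod n k U (ttrans n k U) = tid n k"

definition fdiag :: "nat \<Rightarrow> nat \<Rightarrow> tensor \<Rightarrow> bool" where
  "fdiag n k S \<longleftrightarrow> valid_tensor n k S \<and> (\<forall>i i' j. i \<noteq> i' \<longrightarrow> S i i' j = 0)"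

definition is_tsvd :: "nat \<Rightarrow> nat \<Rightarrow> tensor \<Rightarrow> tensor \<Rightarrow> tensor \<Rightarrow> tensor \<Rightarrow> bool" where
  "is_tsvd n k T U S V \<longleftrightarrow> torth n k U \<and> torth n k V \<and> fdiag n k S \<and>
     T = tprod n k (tprod n k U S) (ttrans n k V)"

definition nonzero_tubes :: "nat \<Rightarrow> nat \<Rightarrow> tensor \<Rightarrow> nat" where
  "nonzero_tubes n k S = card {i. i < n \<and> (\<exists>j<k. S i i j \<noteq> 0)}"

text \<open>Tubal rank: number of nonzero diagonal tubes of Sigma in a t-SVD
  (taken minimal over all t-SVDs; this is independent of the choice for ordered t-SVDs).\<close>
definition tubal_rank :: "nat \<Rightarrow> nat \<Rightarrow> tensor \<Rightarrow> nat" where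
  "tubal_rank n k T = (LEAST s. \<exists>U S V. is_tsvd n k T U S V \<and> s = nonzero_tubes n k S)"

definition tsym :: "nat \<Rightarrow> nat \<Rightarrow> tensor set" where
  "tsym n k = {T. valid_tensor n k T \<and> ttrans n k T = T}"

definition tinner :: "nat \<Rightarrow> nat \<Rightarrow> tensor \<Rightarrow> tensor \<Rightarrow> real" where
  "tinner n k A B = (\<Sum>i<n. \<Sum>i'<n. \<Sum>j<k. A i i' j * B i i' j)"

definition fro_norm :: "nat \<Rightarrow> nat \<Rightarrow> tensor \<Rightarrow> real" where
  "fro_norm n k T = sqrt (tinner n k T T)"

definition fslice :: "nat \<Rightarrow> tensor \<Rightarrow> nat \<Rightarrow> nat \<Rightarrow> nat \<Rightarrow> complex" where
  "fslice k T j i i' = (\<Sum>j'<k. complex_of_real (T i i' j') *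
      exp (- \<i> * complex_of_real (2 * pi * real j * real j' / real k)))"

definition blockdiag :: "nat \<Rightarrow> nat \<Rightarrow> tensor \<Rightarrow> nat \<Rightarrow> nat \<Rightarrow> complex" where
  "blockdiag n k T p q = (if p < n * k \<and> q < n * k \<and> p div n = q div n
      then fslice k T (p div n) (p mod n) (q mod n) else 0)"

definition cvnorm :: "nat \<Rightarrow> (nat \<Rightarrow> complex) \<Rightarrow> real" where
  "cvnorm N x = sqrt (\<Sum>p<N. (cmod (x p))\<^sup>2)"

definition cmatvec :: "nat \<Rightarrow> (nat \<Rightarrow> nat \<Rightarrow> complex) \<Rightarrow> (nat \<Rightarrow> complex) \<Rightarrow> nat \<Rightarrow> complex" where
  "cmatvec N M x = (\<lambda>p. \<Sum>q<N. M p q * x q)"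

definition cmat_opnorm :: "nat \<Rightarrow> (nat \<Rightarrow> nat \<Rightarrow> complex) \<Rightarrow> real" where
  "cmat_opnorm N M = Sup {cvnorm N (cmatvec N M x) | x. cvnorm N x \<le> 1}"

definition spec_norm :: "nat \<Rightarrow> nat \<Rightarrow> tensor \<Rightarrow> real" where
  "spec_norm n k T = cmat_opnorm (n * k) (blockdiag n k T)"

text \<open>The measurement operator is given by m tubal-symmetric tensors A_0..A_(m-1).\<close>
definition meas :: "nat \<Rightarrow> nat \<Rightarrow> nat \<Rightarrow> (nat \<Rightarrow> tensor) \<Rightarrow> tensor \<Rightarrow> nat \<Rightarrow> real" where
  "meas n k m A Z = (\<lambda>i. if i < m then tinner n k (A i) Z else 0)"

definition meas_adj :: "nat \<Rightarrow> (nat \<Rightarrow> tensor) \<Rightarrow> (nat \<Rightarrow> real) \<Rightarrow> tensor" where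
  "meas_adj m A z = (\<lambda>a b c. \<Sum>i<m. z i * A i a b c)"

definition RIP :: "nat \<Rightarrow> nat \<Rightarrow> nat \<Rightarrow> (nat \<Rightarrow> tensor) \<Rightarrow> nat \<Rightarrow> real \<Rightarrow> bool" where
  "RIP n k m A s \<delta> \<longleftrightarrow> (\<forall>Z \<in> tsym n k. tubal_rank n k Z \<le> s \<longrightarrow>
      (1 - \<delta>) * (fro_norm n k Z)\<^sup>2 \<le> (\<Sum>i<m. (meas n k m A Z i)\<^sup>2) \<and>
      (\<Sum>i<m. (meas n k m A Z i)\<^sup>2) \<le> (1 + \<delta>) * (fro_norm n k Z)\<^sup>2)"

definition S2SRIP :: "nat \<Rightarrow> nat \<Rightarrow> nat \<Rightarrow> (nat \<Rightarrow> tensor) \<Rightarrow> nat \<Rightarrow> real \<Rightarrow> bool" where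
  "S2SRIP n k m A r \<delta> \<longleftrightarrow> (\<forall>Z \<in> tsym n k. tubal_rank n k Z \<le> r \<longrightarrow>
      spec_norm n k (\<lambda>a b c. Z a b c - meas_adj m A (meas n k m A Z) a b c)
        \<le> \<delta> * spec_norm n k Z)"

end

theory Submission
  imports Defs "HOL-Analysis.Analysis"
begin

definition ip :: "nat \<Rightarrow> (nat\<Rightarrow>complex) \<Rightarrow> (nat\<Rightarrow>complex) \<Rightarrow> complex" where
  "ip n u v = (\<Sum>i<n. cnj (u i) * v i)"
definition inV :: "nat \<Rightarrow> (nat\<Rightarrow>complex) \<Rightarrow> bool" where
  "inV n v \<longleftrightarrow> (\<forall>i\<ge>n. v i = 0)"
definition mv :: "nat \<Rightarrow> (nat\<Rightarrow>nat\<Rightarrow>complex) \<Rightarrow> (nat\<Rightarrow>complex) \<Rightarrow> nat \<Rightarrow> complex" where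
  "mv n H v = (\<lambda>i. if i < n then \<Sum>j<n. H i j * v j else 0)"
definition herm :: "nat \<Rightarrow> (nat\<Rightarrow>nat\<Rightarrow>complex) \<Rightarrow> bool" where
  "herm n H \<longleftrightarrow> (\<forall>i<n. \<forall>j<n. H j i = cnj (H i j))"
definition orthon :: "nat \<Rightarrow> nat set \<Rightarrow> (nat \<Rightarrow> nat \<Rightarrow> complex) \<Rightarrow> bool" where
  "orthon n A q \<longleftrightarrow> (\<forall>a\<in>A. \<forall>b\<in>A. ip n (q a) (q b) = (if a = b then 1 else 0)) \<and> (\<forall>a\<in>A. inV n (q a))"

lemma cnj_mult_self: "cnj z * z = complex_of_real ((cmod z)\<^sup>2)"
  using complex_norm_square[of z] by (simp add: mult.commute)

lemma ip_cnj: "cnj (ip n u v) = ip n v u"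
  unfolding ip_def by (simp add: mult.commute)

lemma ip_self: "ip n v v = of_real (\<Sum>i<n. (cmod (v i))\<^sup>2)"
  unfolding ip_def by (simp add: cnj_mult_self)

lemma ip_self_Re: "Re (ip n v v) = (\<Sum>i<n. (cmod (v i))\<^sup>2)"
  by (simp add: ip_self)

lemma ip_self_nonneg: "Re (ip n v v) \<ge> 0"
  by (simp add: ip_self_Re sum_nonneg)

lemma ip_self_real: "ip n v v = of_real (Re (ip n v v))"
  by (simp add: ip_self)

lemma ip_zeroD: assumes "inV n v" "Re (ip n v v) = 0" shows "v = (\<lambda>i. 0)"
proof
  fix i show "v i = 0"
  proof (cases "i < n")
    case True
    have "\<forall>i\<in>{..<n}. (cmod (v i))\<^sup>2 = 0"
      using assms(2) by (subst sum_nonneg_eq_0_iff[symmetric]) (auto simp: ip_self_Re)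
    then show ?thesis using True by auto
  next
    case False then show ?thesis using assms(1) by (auto simp: inV_def)
  qed
qed

lemma ip_lin_right: "ip n u (\<lambda>i. a * v i + b * w i) = a * ip n u v + b * ip n u w"
  unfolding ip_def by (simp add: algebra_simps sum.distrib sum_distrib_left)

lemma ip_lin_left: "ip n (\<lambda>i. a * v i + b * w i) u = cnj a * ip n v u + cnj b * ip n w u"
  unfolding ip_def by (simp add: algebra_simps sum.distrib sum_distrib_left)

lemma ip_scale_right: "ip n u (\<lambda>i. a * v i) = a * ip n u v"
  unfolding ip_def by (simp add: algebra_simps sum_distrib_left)

lemma ip_scale_left: "ip n (\<lambda>i. a * v i) u = cnj a * ip n v u"
  unfolding ip_def by (simp add: algebra_simps sum_distrib_left)

lemma ip_sum_right: "ip n u (\<lambda>i. \<Sum>b\<in>B. c b * f b i) = (\<Sum>b\<in>B. c b * ip n u (f b))"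
  unfolding ip_def sum_distrib_left by (subst sum.swap) (simp add: mult_ac)

lemma ip_sum_left: "ip n (\<lambda>i. \<Sum>b\<in>B. c b * f b i) u = (\<Sum>b\<in>B. cnj (c b) * ip n (f b) u)"
  unfolding ip_def cnj_sum sum_distrib_left sum_distrib_right by (subst sum.swap) (simp add: mult_ac)

lemma ip_diff_right: "ip n u (\<lambda>i. v i - w i) = ip n u v - ip n u w"
  unfolding ip_def by (simp add: algebra_simps sum_subtractf)

lemma ip_diff_left: "ip n (\<lambda>i. v i - w i) u = ip n v u - ip n w u"
  unfolding ip_def by (simp add: algebra_simps sum_subtractf)

lemma ip_add_right: "ip n u (\<lambda>i. v i + w i) = ip n u v + ip n u w"
  unfolding ip_def by (simp add: algebra_simps sum.distrib)

lemma ip_add_left: "ip n (\<lambda>i. v i + w i) u = ip n v u + ip n w u"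
  unfolding ip_def by (simp add: algebra_simps sum.distrib)

lemma herm_adj: assumes "herm n H" shows "ip n u (mv n H v) = ip n (mv n H u) v"
proof -
  have "ip n u (mv n H v) = (\<Sum>i<n. \<Sum>j<n. cnj (u i) * H i j * v j)"
    unfolding ip_def mv_def by (simp add: sum_distrib_left mult_ac)
  also have "\<dots> = (\<Sum>j<n. \<Sum>i<n. cnj (u i) * H i j * v j)" by (rule sum.swap)
  also have "\<dots> = (\<Sum>j<n. \<Sum>i<n. cnj (H j i * u i) * v j)"
  proof (intro sum.cong refl)
    fix i j assume "j \<in> {..<n}" "i \<in> {..<n}"
    then have "H i j = cnj (H j i)" using assms unfolding herm_def by blast
    then have "cnj (H j i) = H i j" by (metis complex_cnj_cnj)
    then show "cnj (u i) * H i j * v j = cnj (H j i * u i) * v j" by simp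
  qed
  also have "\<dots> = ip n (mv n H u) v"
    unfolding ip_def mv_def by (simp add: sum_distrib_right cnj_sum)
  finally show ?thesis .
qed

lemma cnj_eq_real: assumes "cnj z = z" shows "z = of_real (Re z)"
proof -
  have "Im (cnj z) = Im z" using assms by simp
  then have "Im z = 0" by simp
  then show ?thesis by (simp add: complex_eq_iff)
qed

lemma herm_quad_real: assumes "herm n H" shows "ip n v (mv n H v) = of_real (Re (ip n v (mv n H v)))"
proof -
  have "cnj (ip n v (mv n H v)) = ip n v (mv n H v)"
    by (simp add: ip_cnj herm_adj[OF assms])
  then show ?thesis by (rule cnj_eq_real)
qed

lemma inV_mv: "inV n (mv n H v)" by (simp add: inV_def mv_def)

lemma mv_lin: "mv n H (\<lambda>i. a * v i + b * w i) = (\<lambda>i. a * mv n H v i + b * mv n H w i)"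
  unfolding mv_def by (rule ext) (simp add: distrib_left sum.distrib sum_distrib_left mult.left_commute)

lemma mv_scale: "mv n H (\<lambda>i. a * v i) = (\<lambda>i. a * mv n H v i)"
  unfolding mv_def by (rule ext) (simp add: sum_distrib_left mult.left_commute)

lemma mv_sum: "mv n H (\<lambda>i. \<Sum>b\<in>B. c b * f b i) = (\<lambda>i. \<Sum>b\<in>B. c b * mv n H (f b) i)"
proof
  fix i show "mv n H (\<lambda>i. \<Sum>b\<in>B. c b * f b i) i = (\<Sum>b\<in>B. c b * mv n H (f b) i)"
  proof (cases "i < n")
    case True
    have "mv n H (\<lambda>i. \<Sum>b\<in>B. c b * f b i) i = (\<Sum>j<n. \<Sum>b\<in>B. H i j * (c b * f b j))"
      using True unfolding mv_def by (simp add: sum_distrib_left)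
    also have "\<dots> = (\<Sum>b\<in>B. \<Sum>j<n. H i j * (c b * f b j))" by (rule sum.swap)
    also have "\<dots> = (\<Sum>b\<in>B. c b * mv n H (f b) i)"
      using True unfolding mv_def by (simp add: sum_distrib_left mult_ac)
    finally show ?thesis .
  qed (simp add: mv_def)
qed

lemma orthon_ip_sum:
  assumes "orthon n A q" "finite A" and that: "a \<in> A"
  shows "ip n (q a) (\<lambda>i. \<Sum>b\<in>A. c b * q b i) = (if a \<in> A then c a else 0)"
proof -
  have "ip n (q a) (\<lambda>i. \<Sum>b\<in>A. c b * q b i) = (\<Sum>b\<in>A. c b * ip n (q a) (q b))"
    by (rule ip_sum_right)
  also have "\<dots> = (\<Sum>b\<in>A. if b = a then c b else 0)"
    using assms that unfolding orthon_def by (intro sum.cong) auto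
  also have "\<dots> = c a" using assms(2) that by (simp add: sum.delta')
  finally show ?thesis using that by simp
qed

lemma bessel_id:
  fixes v :: "nat \<Rightarrow> complex"
  assumes "orthon n A q" "finite A"
  defines "P \<equiv> (\<lambda>i. \<Sum>a\<in>A. ip n (q a) v * q a i)"
  shows "\<And>a. a \<in> A \<Longrightarrow> ip n (q a) (\<lambda>i. v i - P i) = 0"
    and "Re (ip n (\<lambda>i. v i - P i) (\<lambda>i. v i - P i)) = Re (ip n v v) - (\<Sum>a\<in>A. (cmod (ip n (q a) v))\<^sup>2)"
proof -
  fix a assume a: "a \<in> A"
  have "ip n (q a) P = ip n (q a) v"
    unfolding P_def using orthon_ip_sum[OF assms(1,2) a] a by simp
  then show "ip n (q a) (\<lambda>i. v i - P i) = 0" by (simp add: ip_diff_right)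
next
  have vP: "ip n v P = (\<Sum>a\<in>A. ip n (q a) v * ip n v (q a))"
    unfolding P_def by (rule ip_sum_right)
  have Pv: "ip n P v = (\<Sum>a\<in>A. cnj (ip n (q a) v) * ip n (q a) v)"
    unfolding P_def by (rule ip_sum_left)
  have PP: "ip n P P = (\<Sum>a\<in>A. cnj (ip n (q a) v) * ip n (q a) v)"
  proof -
    have "ip n P P = (\<Sum>a\<in>A. cnj (ip n (q a) v) * ip n (q a) P)"
      unfolding P_def by (rule ip_sum_left)
    also have "\<dots> = (\<Sum>a\<in>A. cnj (ip n (q a) v) * ip n (q a) v)"
      using orthon_ip_sum[OF assms(1,2)] unfolding P_def by (intro sum.cong) auto
    finally show ?thesis .
  qed
  have vq: "ip n v (q a) = cnj (ip n (q a) v)" for a by (simp add: ip_cnj)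
  have "ip n (\<lambda>i. v i - P i) (\<lambda>i. v i - P i) = ip n v v - ip n v P - ip n P v + ip n P P"
    by (simp add: ip_diff_left ip_diff_right)
  also have "\<dots> = ip n v v - (\<Sum>a\<in>A. cnj (ip n (q a) v) * ip n (q a) v)"
    using vP Pv PP by (simp add: vq mult.commute)
  finally have "Re (ip n (\<lambda>i. v i - P i) (\<lambda>i. v i - P i)) = Re (ip n v v) - (\<Sum>a\<in>A. Re (cnj (ip n (q a) v) * ip n (q a) v))"
    by (simp add: Re_sum)
  also have "(\<Sum>a\<in>A. Re (cnj (ip n (q a) v) * ip n (q a) v)) = (\<Sum>a\<in>A. (cmod (ip n (q a) v))\<^sup>2)"
    by (intro sum.cong) (simp_all only: cnj_mult_self Re_complex_of_real)
  finally show "Re (ip n (\<lambda>i. v i - P i) (\<lambda>i. v i - P i)) = Re (ip n v v) - (\<Sum>a\<in>A. (cmod (ip n (q a) v))\<^sup>2)" .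
qed

lemma bessel:
  assumes "orthon n A q" "finite A"
  shows "(\<Sum>a\<in>A. (cmod (ip n (q a) v))\<^sup>2) \<le> Re (ip n v v)"
  proof -
  have "0 \<le> Re (ip n (\<lambda>i. v i - (\<Sum>a\<in>A. ip n (q a) v * q a i)) (\<lambda>i. v i - (\<Sum>a\<in>A. ip n (q a) v * q a i)))"
    by (rule ip_self_nonneg)
  then show ?thesis using bessel_id(2)[OF assms, of v] by linarith
qed

definition ev :: "nat \<Rightarrow> nat \<Rightarrow> complex" where
  "ev j = (\<lambda>i. if i = j then 1 else 0)"

lemma ip_ev_right: "j < n \<Longrightarrow> ip n u (ev j) = cnj (u j)"
  unfolding ip_def ev_def by (simp add: if_distrib cong: if_cong)

lemma ip_ev_self: assumes "j < n" shows "ip n (ev j) (ev j) = 1"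
proof -
  have "ip n (ev j) (ev j) = cnj (ev j j)" by (rule ip_ev_right[OF assms])
  also have "\<dots> = 1" by (simp add: ev_def)
  finally show ?thesis .
qed

lemma inV_ev: "j < n \<Longrightarrow> inV n (ev j)"
  unfolding inV_def ev_def by auto

lemma inV_diff: "inV n v \<Longrightarrow> inV n w \<Longrightarrow> inV n (\<lambda>i. v i - w i)"
  unfolding inV_def by auto

lemma inV_sum: "(\<And>b. b \<in> B \<Longrightarrow> inV n (f b)) \<Longrightarrow> inV n (\<lambda>i. \<Sum>b\<in>B. c b * f b i)"
  unfolding inV_def by (auto intro!: sum.neutral)

lemma inV_scale: "inV n v \<Longrightarrow> inV n (\<lambda>i. c * v i)"
  unfolding inV_def by auto

lemma inV_lin: "inV n v \<Longrightarrow> inV n w \<Longrightarrow> inV n (\<lambda>i. a * v i + b * w i)"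
  unfolding inV_def by auto

lemma inV_add: "inV n v \<Longrightarrow> inV n w \<Longrightarrow> inV n (\<lambda>i. v i + w i)"
  unfolding inV_def by auto

lemma ip_self_pos: "inV n v \<Longrightarrow> v \<noteq> (\<lambda>i. 0) \<Longrightarrow> Re (ip n v v) > 0"
  using ip_zeroD[of n v] ip_self_nonneg[of n v] by fastforce

lemma normalize_vec:
  assumes "Re (ip n w w) > 0"
  defines "v \<equiv> (\<lambda>i. complex_of_real (1 / sqrt (Re (ip n w w))) * w i)"
  shows "ip n v v = 1"
proof -
  define c where "c = 1 / sqrt (Re (ip n w w))"
  have "ip n v v = complex_of_real c * complex_of_real c * ip n w w"
    unfolding v_def c_def by (simp only: ip_scale_left ip_scale_right complex_cnj_complex_of_real mult.assoc)
  also have "\<dots> = complex_of_real (c * c * Re (ip n w w))"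
    by (subst ip_self_real) (simp only: of_real_mult)
  also have "c * c * Re (ip n w w) = 1"
    using assms(1) unfolding c_def by (simp add: divide_simps)
  finally show ?thesis by simp
qed

lemma real_sum_scale:
  assumes "\<And>b. b \<in> B \<Longrightarrow> Im (c b) = 0" "\<And>b. b \<in> B \<Longrightarrow> Im (f b i) = 0"
  shows "Im (\<Sum>b\<in>B. c b * f b i) = 0"
  using assms by (simp add: Im_sum)

lemma exists_orth_unit:
  assumes orth: "orthon n {..<p} q" and pn: "p < n"
    and fl: "flag \<Longrightarrow> \<forall>a<p. \<forall>i. Im (q a i) = 0"
  shows "\<exists>v. inV n v \<and> ip n v v = 1 \<and> (\<forall>a<p. ip n (q a) v = 0) \<and> (flag \<longrightarrow> (\<forall>i. Im (v i) = 0))"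
proof -
  define S where "S j = (\<Sum>a<p. (cmod (ip n (q a) (ev j)))\<^sup>2)" for j
  have "(\<Sum>j<n. S j) = (\<Sum>a<p. \<Sum>j<n. (cmod (q a j))\<^sup>2)"
    unfolding S_def by (subst sum.swap) (simp add: ip_ev_right)
  also have "\<dots> = (\<Sum>a<p. Re (ip n (q a) (q a)))"
    by (simp add: ip_self_Re)
  also have "\<dots> = real p"
    using orth unfolding orthon_def by simp
  finally have sumS: "(\<Sum>j<n. S j) = real p" .
  have "\<exists>j<n. S j < 1"
  proof (rule ccontr)
    assume "\<not> ?thesis"
    then have "\<forall>j\<in>{..<n}. 1 \<le> S j" by auto
    then have "(\<Sum>j<n. (1::real)) \<le> (\<Sum>j<n. S j)" by (intro sum_mono) auto
    then show False using sumS pn by simp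
  qed
  then obtain j where j: "j < n" "S j < 1" by blast
  define P where "P = (\<lambda>i. \<Sum>a<p. ip n (q a) (ev j) * q a i)"
  define w where "w = (\<lambda>i. ev j i - P i)"
  have w1: "\<And>a. a \<in> {..<p} \<Longrightarrow> ip n (q a) w = 0"
    using bessel_id(1)[OF orth finite_lessThan, of _ "ev j"] unfolding w_def P_def by blast
  have w2: "Re (ip n w w) = 1 - S j"
    using bessel_id(2)[OF orth finite_lessThan, of "ev j"] j(1) unfolding w_def P_def S_def
    by (simp add: ip_ev_self)
  have wpos: "Re (ip n w w) > 0" using w2 j by simp
  have inVw: "inV n w"
    unfolding w_def P_def using orth unfolding orthon_def
    by (intro inV_diff inV_ev j inV_sum) auto
  define v where "v \<equiv> (\<lambda>i. complex_of_real (1 / sqrt (Re (ip n w w))) * w i)"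
  have "ip n v v = 1" unfolding v_def by (rule normalize_vec[OF wpos])
  moreover have "inV n v" unfolding v_def by (rule inV_scale[OF inVw])
  moreover have "\<forall>a<p. ip n (q a) v = 0"
  proof (intro allI impI)
    fix a assume "a < p"
    then show "ip n (q a) v = 0" unfolding v_def ip_scale_right using w1 by simp
  qed
  moreover have "flag \<longrightarrow> (\<forall>i. Im (v i) = 0)"
  proof (intro impI allI)
    fix i assume f: flag
    have "Im (P i) = 0" unfolding P_def
    proof (rule real_sum_scale)
      fix a assume "a \<in> {..<p}"
      then show "Im (ip n (q a) (ev j)) = 0" "Im (q a i) = 0"
        using fl[OF f] j(1) by (auto simp: ip_ev_right)
    qed
    then show "Im (v i) = 0" unfolding v_def w_def by (simp add: ev_def)
  qed
  ultimately show ?thesis by blast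
qed

lemma cont_coord: "continuous_on UNIV (\<lambda>v::nat\<Rightarrow>complex. v i)"
  by (rule continuous_on_product_coordinates)

lemma cont_ip: "continuous_on UNIV (\<lambda>v::nat\<Rightarrow>complex. ip n (f v) (g v))"
  if "\<And>i. continuous_on UNIV (\<lambda>v. f v i)" "\<And>i. continuous_on UNIV (\<lambda>v. g v i)"
  unfolding ip_def by (intro continuous_intros that)

lemma closed_coord_eq0: "closed {v::nat\<Rightarrow>complex. v i = 0}"
  using closed_Collect_eq[OF cont_coord continuous_on_const] by simp

lemma compact_K:
  "compact {v::nat\<Rightarrow>complex. inV n v \<and> ip n v v = 1 \<and> (\<forall>a<p. ip n (q a) v = 0) \<and> (flag \<longrightarrow> (\<forall>i. Im (v i) = 0))}"
  (is "compact ?K")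
proof -
  define B where "B = PiE UNIV (\<lambda>i::nat. if i < n then cball (0::complex) 1 else {0})"
  have "compactin (product_topology (\<lambda>i. euclidean) UNIV) B"
    unfolding B_def compactin_PiE by auto
  then have cB: "compact B" by (simp add: euclidean_product_topology)
  have c1: "closed {v::nat\<Rightarrow>complex. inV n v}"
    unfolding inV_def
  proof (intro closed_Collect_all)
    fix i show "closed {v::nat\<Rightarrow>complex. n \<le> i \<longrightarrow> v i = 0}"
      by (cases "n \<le> i") (simp_all add: closed_coord_eq0)
  qed
  have c2: "closed {v::nat\<Rightarrow>complex. ip n v v = 1}"
    by (intro closed_Collect_eq cont_ip cont_coord continuous_on_const)
  have c3: "closed {v::nat\<Rightarrow>complex. \<forall>a<p. ip n (q a) v = 0}"
  proof (intro closed_Collect_all)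
    fix a show "closed {v::nat\<Rightarrow>complex. a < p \<longrightarrow> ip n (q a) v = 0}"
    proof (cases "a < p")
      case True
      have "closed {v::nat\<Rightarrow>complex. ip n (q a) v = 0}"
        by (intro closed_Collect_eq cont_ip cont_coord continuous_on_const)
      then show ?thesis using True by simp
    qed simp
  qed
  have c4: "closed {v::nat\<Rightarrow>complex. flag \<longrightarrow> (\<forall>i. Im (v i) = 0)}"
  proof (cases flag)
    case True
    have "closed {v::nat\<Rightarrow>complex. \<forall>i. Im (v i) = 0}"
      by (intro closed_Collect_all closed_Collect_eq continuous_on_Im cont_coord continuous_on_const)
    then show ?thesis using True by simp
  qed simp
  have cK: "closed ?K"
    using closed_Collect_conj[OF c1 closed_Collect_conj[OF c2 closed_Collect_conj[OF c3 c4]]] .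
  have sub: "?K \<subseteq> B"
  proof
    fix v assume v: "v \<in> ?K"
    have "v i \<in> (if i < n then cball 0 1 else {0})" for i
    proof (cases "i < n")
      case True
      have "(cmod (v i))\<^sup>2 \<le> (\<Sum>j<n. (cmod (v j))\<^sup>2)"
        using True by (intro member_le_sum) auto
      also have "\<dots> = 1" using v ip_self_Re[of n v] by simp
      finally have "cmod (v i) \<le> 1" by (simp add: power_le_one_iff abs_le_iff)
      then show ?thesis using True by (simp add: dist_norm)
    next
      case False then show ?thesis using v unfolding inV_def by auto
    qed
    then show "v \<in> B" unfolding B_def by (simp add: PiE_iff)
  qed
  have "?K = B \<inter> ?K" using sub by blast
  then show ?thesis using compact_Int_closed[OF cB cK] by simp
qed

lemma mv_add: "mv n H (\<lambda>i. v i + w i) = (\<lambda>i. mv n H v i + mv n H w i)"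
  unfolding mv_def by (rule ext) (simp add: distrib_left sum.distrib)

lemma ip_expand:
  "ip n (\<lambda>i. v i + complex_of_real t * w i) (\<lambda>i. x i + complex_of_real t * y i)
   = ip n v x + complex_of_real t * ip n v y + complex_of_real t * ip n w x + complex_of_real t * complex_of_real t * ip n w y"
  by (simp add: ip_add_left ip_add_right ip_scale_left ip_scale_right algebra_simps)

lemma quad_expand:
  assumes "herm n H"
  shows "Re (ip n (\<lambda>i. v i + complex_of_real t * w i) (mv n H (\<lambda>i. v i + complex_of_real t * w i)))
    = Re (ip n v (mv n H v)) + 2 * t * Re (ip n w (mv n H v)) + t * t * Re (ip n w (mv n H w))"
proof -
  have "mv n H (\<lambda>i. v i + complex_of_real t * w i) = (\<lambda>i. mv n H v i + complex_of_real t * mv n H w i)"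
    by (simp add: mv_add mv_scale)
  then have "ip n (\<lambda>i. v i + complex_of_real t * w i) (mv n H (\<lambda>i. v i + complex_of_real t * w i)) =
     ip n v (mv n H v) + complex_of_real t * ip n v (mv n H w) + complex_of_real t * ip n w (mv n H v) + complex_of_real t * complex_of_real t * ip n w (mv n H w)"
    by (simp only: ip_expand)
  moreover have "Re (ip n v (mv n H w)) = Re (ip n w (mv n H v))"
  proof -
    have "ip n v (mv n H w) = ip n (mv n H v) w" by (rule herm_adj[OF assms])
    also have "\<dots> = cnj (ip n w (mv n H v))" by (simp add: ip_cnj)
    finally show ?thesis by simp
  qed
  ultimately show ?thesis by (simp add: algebra_simps)
qed

lemma norm_expand:
  assumes "ip n w v = 0"
  shows "Re (ip n (\<lambda>i. v i + complex_of_real t * w i) (\<lambda>i. v i + complex_of_real t * w i))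
    = Re (ip n v v) + t * t * Re (ip n w w)"
proof -
  have "ip n v w = 0" using assms by (metis ip_cnj complex_cnj_zero)
  then show ?thesis using assms by (simp only: ip_expand) simp
qed

lemma mv_real: "(\<forall>i<n. \<forall>j<n. Im (H i j) = 0) \<Longrightarrow> (\<forall>i. Im (v i) = 0) \<Longrightarrow> Im (mv n H v i) = 0"
  unfolding mv_def by (simp add: Im_sum)

lemma quad_scale: "ip n (\<lambda>i. complex_of_real c * x i) (mv n H (\<lambda>i. complex_of_real c * x i))
   = complex_of_real (c * c) * ip n x (mv n H x)"
  by (simp add: mv_scale ip_scale_left ip_scale_right)

lemma Re_complex_of_real_mult: "Re (complex_of_real r * z) = r * Re z"
  by simp

lemma cont_mv: "continuous_on UNIV (\<lambda>x::nat\<Rightarrow>complex. mv n H x i)"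
proof (cases "i < n")
  case True
  then show ?thesis unfolding mv_def by (simp, intro continuous_intros cont_coord)
qed (simp add: mv_def)

lemma eig_exists:
  assumes H: "herm n H" and orth: "orthon n {..<p} q" and pn: "p < n"
    and eig: "\<forall>a<p. mv n H (q a) = (\<lambda>i. complex_of_real (lam a) * q a i)"
    and flH: "flag \<Longrightarrow> \<forall>i<n. \<forall>j<n. Im (H i j) = 0"
    and flq: "flag \<Longrightarrow> \<forall>a<p. \<forall>i. Im (q a i) = 0"
  shows "\<exists>v l. inV n v \<and> ip n v v = 1 \<and> (\<forall>a<p. ip n (q a) v = 0) \<and> (flag \<longrightarrow> (\<forall>i. Im (v i) = 0))
     \<and> mv n H v = (\<lambda>i. complex_of_real l * v i)"
proof -
  define K where "K = {v::nat\<Rightarrow>complex. inV n v \<and> ip n v v = 1 \<and> (\<forall>a<p. ip n (q a) v = 0) \<and> (flag \<longrightarrow> (\<forall>i. Im (v i) = 0))}"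
  define f where "f v = Re (ip n v (mv n H v))" for v
  have cK: "compact K" unfolding K_def by (rule compact_K)
  have neK: "K \<noteq> {}" using exists_orth_unit[OF orth pn flq] unfolding K_def by blast
  have cf: "continuous_on K f"
  proof -
    have "continuous_on UNIV f" unfolding f_def
      by (intro continuous_intros cont_ip cont_coord cont_mv)
    then show ?thesis by (rule continuous_on_subset) simp
  qed
  obtain v0 where v0K: "v0 \<in> K" and v0max: "\<forall>y\<in>K. f y \<le> f v0"
    using continuous_attains_sup[OF cK neK cf] by blast
  define l where "l = f v0"
  have v0: "inV n v0" "ip n v0 v0 = 1" "\<forall>a<p. ip n (q a) v0 = 0" "flag \<longrightarrow> (\<forall>i. Im (v0 i) = 0)"
    using v0K unfolding K_def by auto
  have claim: "f x \<le> l * Re (ip n x x)"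
    if x: "inV n x" "\<forall>a<p. ip n (q a) x = 0" "flag \<longrightarrow> (\<forall>i. Im (x i) = 0)" for x
  proof (cases "x = (\<lambda>i. 0)")
    case True then show ?thesis by (simp add: f_def ip_def)
  next
    case False
    have pos: "Re (ip n x x) > 0" by (rule ip_self_pos[OF x(1) False])
    define c where "c = 1 / sqrt (Re (ip n x x))"
    define y where "y = (\<lambda>i. complex_of_real c * x i)"
    have "y \<in> K" unfolding K_def
    proof (intro CollectI conjI)
      show "inV n y" unfolding y_def by (rule inV_scale[OF x(1)])
      show "ip n y y = 1" unfolding y_def c_def by (rule normalize_vec[OF pos])
      show "\<forall>a<p. ip n (q a) y = 0" using x(2) unfolding y_def by (simp add: ip_scale_right)
      show "flag \<longrightarrow> (\<forall>i. Im (y i) = 0)" using x(3) unfolding y_def by simp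
    qed
    then have "f y \<le> l" using v0max unfolding l_def by blast
    moreover have "f y = c * c * f x" unfolding f_def y_def by (simp only: quad_scale Re_complex_of_real_mult) 
    moreover have "c * c * Re (ip n x x) = 1" using pos unfolding c_def by (simp add: divide_simps)
    ultimately have "c * c * f x \<le> c * c * (l * Re (ip n x x))" by (simp add: algebra_simps)
    moreover have "c * c > 0" using pos unfolding c_def by simp
    ultimately show ?thesis using mult_left_le_imp_le by blast
  qed
  define w where "w = (\<lambda>i. mv n H v0 i - complex_of_real l * v0 i)"
  have inVw: "inV n w" unfolding w_def by (intro inV_diff inV_mv inV_scale v0(1))
  have wq: "\<forall>a<p. ip n (q a) w = 0"
  proof (intro allI impI)
    fix a assume a: "a < p"
    have "ip n (q a) (mv n H v0) = ip n (mv n H (q a)) v0" by (rule herm_adj[OF H])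
    also have "\<dots> = complex_of_real (lam a) * ip n (q a) v0" using eig a by (simp add: ip_scale_left)
    also have "\<dots> = 0" using v0(3) a by simp
    finally show "ip n (q a) w = 0" unfolding w_def using v0(3) a by (simp add: ip_diff_right ip_scale_right)
  qed
  have wr: "flag \<longrightarrow> (\<forall>i. Im (w i) = 0)"
    using v0(4) flH mv_real unfolding w_def by auto
  have v0w: "ip n v0 w = 0"
  proof -
    have "ip n v0 (mv n H v0) = complex_of_real l" unfolding l_def f_def by (rule herm_quad_real[OF H])
    then show ?thesis unfolding w_def using v0(2) by (simp add: ip_diff_right ip_scale_right)
  qed
  then have wv0: "ip n w v0 = 0" by (metis ip_cnj complex_cnj_zero)
  have wHv0: "ip n w (mv n H v0) = ip n w w"
  proof -
    have "mv n H v0 = (\<lambda>i. w i + complex_of_real l * v0 i)" unfolding w_def by simp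
    then show ?thesis using wv0 by (simp add: ip_add_right ip_scale_right)
  qed
  define N where "N = Re (ip n w w)"
  define C where "C = l * N - Re (ip n w (mv n H w))"
  have ineq: "2 * N \<le> t * C" if t: "t > 0" for t
  proof -
    define x where "x = (\<lambda>i. v0 i + complex_of_real t * w i)"
    have "f x \<le> l * Re (ip n x x)"
    proof (rule claim)
      show "inV n x" unfolding x_def by (intro inV_add inV_scale v0(1) inVw)
      show "\<forall>a<p. ip n (q a) x = 0" using v0(3) wq unfolding x_def by (simp add: ip_add_right ip_scale_right)
      show "flag \<longrightarrow> (\<forall>i. Im (x i) = 0)" using v0(4) wr unfolding x_def by simp
    qed
    moreover have "f x = l + 2 * t * N + t * t * Re (ip n w (mv n H w))"
      unfolding f_def x_def quad_expand[OF H] using wHv0 by (simp add: l_def f_def N_def)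
    moreover have "Re (ip n x x) = 1 + t * t * N"
      unfolding x_def norm_expand[OF wv0] using v0(2) by (simp add: N_def)
    ultimately have "t * (2 * N) \<le> t * (t * C)" unfolding C_def by (simp add: algebra_simps)
    then show ?thesis using t by simp
  qed
  have N0: "N \<ge> 0" unfolding N_def by (rule ip_self_nonneg)
  have "N = 0"
  proof (rule ccontr)
    assume "N \<noteq> 0"
    then have Np: "N > 0" using N0 by simp
    define t where "t = N / (\<bar>C\<bar> + 1)"
    have tp: "t > 0" unfolding t_def using Np by simp
    have "2 * N \<le> t * C" by (rule ineq[OF tp])
    also have "\<dots> \<le> t * \<bar>C\<bar>" using tp by (simp add: mult_left_mono)
    also have "\<dots> < N" unfolding t_def using Np by (simp add: field_simps)
    finally show False using Np by simp
  qed
  then have "w = (\<lambda>i. 0)" using ip_zeroD[OF inVw] unfolding N_def by simp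
  then have "mv n H v0 = (\<lambda>i. complex_of_real l * v0 i)" unfolding w_def
    by (metis (no_types, lifting) eq_iff_diff_eq_0)
  then show ?thesis using v0 by blast
qed

lemma spectral_partial:
  assumes H: "herm n H" and flH: "flag \<Longrightarrow> \<forall>i<n. \<forall>j<n. Im (H i j) = 0"
  shows "p \<le> n \<Longrightarrow> \<exists>q lam. orthon n {..<p} q \<and> (\<forall>a<p. mv n H (q a) = (\<lambda>i. complex_of_real (lam a) * q a i))
           \<and> (flag \<longrightarrow> (\<forall>a<p. \<forall>i. Im (q a i) = 0))"
proof (induction p)
  case 0
  show ?case by (rule exI[of _ "\<lambda>a i. 0"], rule exI[of _ "\<lambda>a. 0"]) (simp add: orthon_def)
next
  case (Suc p)
  then obtain q lam where IH: "orthon n {..<p} q" "\<forall>a<p. mv n H (q a) = (\<lambda>i. complex_of_real (lam a) * q a i)"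
    "flag \<longrightarrow> (\<forall>a<p. \<forall>i. Im (q a i) = 0)" by auto
  have pn: "p < n" using Suc.prems by simp
  obtain v l where v: "inV n v" "ip n v v = 1" "\<forall>a<p. ip n (q a) v = 0" "flag \<longrightarrow> (\<forall>i. Im (v i) = 0)"
    "mv n H v = (\<lambda>i. complex_of_real l * v i)"
    using eig_exists[OF H IH(1) pn IH(2) flH] IH(3) by blast
  define q' where "q' = q(p := v)"
  define lam' where "lam' = lam(p := l)"
  have vq: "a < p \<Longrightarrow> ip n v (q a) = 0" for a using v(3) by (metis ip_cnj complex_cnj_zero)
  have "orthon n {..<Suc p} q'"
    unfolding orthon_def
  proof (intro conjI ballI)
    fix a b assume "a \<in> {..<Suc p}" "b \<in> {..<Suc p}"
    then show "ip n (q' a) (q' b) = (if a = b then 1 else 0)"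
      using IH(1) v(2,3) vq unfolding orthon_def q'_def by (auto simp: less_Suc_eq)
  next
    fix a assume "a \<in> {..<Suc p}"
    then show "inV n (q' a)" using IH(1) v(1) unfolding orthon_def q'_def by (auto simp: less_Suc_eq)
  qed
  moreover have "\<forall>a<Suc p. mv n H (q' a) = (\<lambda>i. complex_of_real (lam' a) * q' a i)"
    using IH(2) v(5) unfolding q'_def lam'_def by (auto simp: less_Suc_eq)
  moreover have "flag \<longrightarrow> (\<forall>a<Suc p. \<forall>i. Im (q' a i) = 0)"
    using IH(3) v(4) unfolding q'_def by (auto simp: less_Suc_eq)
  ultimately show ?case by blast
qed

lemma completeness:
  assumes orth: "orthon n {..<n} q" and j: "j < n"
  shows "ev j = (\<lambda>i. \<Sum>a<n. cnj (q a j) * q a i)"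
proof -
  define S where "S j = (\<Sum>a<n. (cmod (ip n (q a) (ev j)))\<^sup>2)" for j
  have Sle: "S j \<le> 1" if "j < n" for j
    using bessel[OF orth finite_lessThan, of "ev j"] ip_ev_self[OF that] unfolding S_def by simp
  have "(\<Sum>j<n. S j) = (\<Sum>a<n. \<Sum>j<n. (cmod (q a j))\<^sup>2)"
    unfolding S_def by (subst sum.swap) (simp add: ip_ev_right)
  also have "\<dots> = (\<Sum>a<n. Re (ip n (q a) (q a)))"
    by (simp add: ip_self_Re)
  also have "\<dots> = real n"
    using orth unfolding orthon_def by simp
  finally have sumS: "(\<Sum>j<n. 1 - S j) = 0" by (simp add: sum_subtractf)
  have "\<forall>j\<in>{..<n}. 1 - S j = 0"
    using sumS Sle by (subst sum_nonneg_eq_0_iff[symmetric]) auto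
  then have Sj: "S j = 1" using j by simp
  define P where "P = (\<lambda>i. \<Sum>a<n. ip n (q a) (ev j) * q a i)"
  have "Re (ip n (\<lambda>i. ev j i - P i) (\<lambda>i. ev j i - P i)) = 0"
    using bessel_id(2)[OF orth finite_lessThan, of "ev j"] Sj ip_ev_self[OF j] unfolding P_def S_def by simp
  moreover have "inV n (\<lambda>i. ev j i - P i)"
    unfolding P_def using orth unfolding orthon_def by (intro inV_diff inV_ev j inV_sum) auto
  ultimately have "(\<lambda>i. ev j i - P i) = (\<lambda>i. 0)" using ip_zeroD by blast
  then have "ev j = P" by (metis (no_types, lifting) eq_iff_diff_eq_0 ext)
  then show ?thesis unfolding P_def using j by (simp add: ip_ev_right)
qed

lemma completeness2:
  assumes orth: "orthon n {..<n} q" and i: "i < n" and j: "j < n"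
  shows "(\<Sum>a<n. q a i * cnj (q a j)) = (if i = j then 1 else 0)"
proof -
  have "ev j i = (\<Sum>a<n. cnj (q a j) * q a i)" using completeness[OF orth j] by metis
  then show ?thesis by (simp add: ev_def mult.commute)
qed

lemma spectral:
  assumes H: "herm n H" and flH: "flag \<Longrightarrow> \<forall>i<n. \<forall>j<n. Im (H i j) = 0"
  shows "\<exists>q lam. orthon n {..<n} q \<and> (\<forall>a<n. mv n H (q a) = (\<lambda>i. complex_of_real (lam a) * q a i))
           \<and> (flag \<longrightarrow> (\<forall>a<n. \<forall>i. Im (q a i) = 0))
           \<and> (\<forall>i<n. \<forall>j<n. H i j = (\<Sum>a<n. q a i * complex_of_real (lam a) * cnj (q a j)))"
proof -
  obtain q lam where q: "orthon n {..<n} q" "\<forall>a<n. mv n H (q a) = (\<lambda>i. complex_of_real (lam a) * q a i)"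
    "flag \<longrightarrow> (\<forall>a<n. \<forall>i. Im (q a i) = 0)"
  proof -
    have "\<exists>q lam. orthon n {..<n} q \<and> (\<forall>a<n. mv n H (q a) = (\<lambda>i. complex_of_real (lam a) * q a i))
           \<and> (flag \<longrightarrow> (\<forall>a<n. \<forall>i. Im (q a i) = 0))"
      by (rule spectral_partial[OF H flH]) simp_all
    then show ?thesis using that by blast
  qed
  have "H i j = (\<Sum>a<n. q a i * complex_of_real (lam a) * cnj (q a j))" if ij: "i < n" "j < n" for i j
  proof -
    have "H i j = mv n H (ev j) i" using ij unfolding mv_def ev_def by (simp add: if_distrib cong: if_cong)
    also have "\<dots> = mv n H (\<lambda>i. \<Sum>a<n. cnj (q a j) * q a i) i" using completeness[OF q(1) ij(2)] by simp
    also have "\<dots> = (\<Sum>a<n. cnj (q a j) * mv n H (q a) i)" by (simp add: mv_sum)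
    also have "\<dots> = (\<Sum>a<n. q a i * complex_of_real (lam a) * cnj (q a j))"
      using q(2) by (intro sum.cong) auto
    finally show ?thesis .
  qed
  then show ?thesis using q by blast
qed

lemma orthon_subset: "orthon n A q \<Longrightarrow> B \<subseteq> A \<Longrightarrow> orthon n B q"
  unfolding orthon_def by blast

lemma ip_abs_sym: "cmod (ip n u v) = cmod (ip n v u)"
  by (metis ip_cnj complex_mod_cnj)

lemma rank_count:
  assumes q: "orthon n {..<n} q" "\<forall>a<n. mv n H (q a) = (\<lambda>i. complex_of_real (lam a) * q a i)"
    and F: "orthon n I f" "finite I"
    and rng: "\<forall>v. inV n v \<longrightarrow> (\<exists>c. mv n H v = (\<lambda>i. \<Sum>b\<in>I. c b * f b i))"
  shows "card {a. a < n \<and> lam a \<noteq> 0} \<le> card I"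
proof -
  define N where "N = {a. a < n \<and> lam a \<noteq> 0}"
  have finN: "finite N" unfolding N_def by simp
  have one: "(\<Sum>b\<in>I. (cmod (ip n (f b) (q a)))\<^sup>2) = 1" if a: "a \<in> N" for a
  proof -
    have an: "a < n" "lam a \<noteq> 0" using a unfolding N_def by auto
    have inVq: "inV n (q a)" using q(1) an unfolding orthon_def by auto
    have "mv n H (\<lambda>i. complex_of_real (1 / lam a) * q a i) = (\<lambda>i. complex_of_real (1 / lam a) * (complex_of_real (lam a) * q a i))"
      by (simp only: mv_scale q(2)[rule_format, OF an(1)])
    also have "\<dots> = q a" using an(2) by (auto simp: field_simps)
    finally have "mv n H (\<lambda>i. complex_of_real (1 / lam a) * q a i) = q a" .
    moreover obtain c where "mv n H (\<lambda>i. complex_of_real (1 / lam a) * q a i) = (\<lambda>i. \<Sum>b\<in>I. c b * f b i)"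
      using rng inV_scale[OF inVq] by blast
    ultimately have qa: "q a = (\<lambda>i. \<Sum>b\<in>I. c b * f b i)" by simp
    have cb: "ip n (f b) (q a) = c b" if "b \<in> I" for b
      using orthon_ip_sum[OF F that, of c] that qa by simp
    have "ip n (q a) (q a) = (\<Sum>b\<in>I. cnj (c b) * ip n (f b) (q a))"
      by (subst (1) qa) (rule ip_sum_left)
    also have "\<dots> = (\<Sum>b\<in>I. complex_of_real ((cmod (ip n (f b) (q a)))\<^sup>2))"
      using cb by (intro sum.cong refl) (simp add: cnj_mult_self)
    finally have "Re (ip n (q a) (q a)) = (\<Sum>b\<in>I. (cmod (ip n (f b) (q a)))\<^sup>2)"
      by (simp add: Re_sum)
    moreover have "ip n (q a) (q a) = 1" using q(1) an unfolding orthon_def by auto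
    ultimately show ?thesis by simp
  qed
  have "real (card N) = (\<Sum>a\<in>N. \<Sum>b\<in>I. (cmod (ip n (f b) (q a)))\<^sup>2)"
    using one by simp
  also have "\<dots> = (\<Sum>b\<in>I. \<Sum>a\<in>N. (cmod (ip n (q a) (f b)))\<^sup>2)"
    by (subst sum.swap) (simp add: ip_abs_sym)
  also have "\<dots> \<le> (\<Sum>b\<in>I. Re (ip n (f b) (f b)))"
  proof (rule sum_mono)
    fix b assume "b \<in> I"
    have "orthon n N q" using q(1) by (rule orthon_subset) (auto simp: N_def)
    then show "(\<Sum>a\<in>N. (cmod (ip n (q a) (f b)))\<^sup>2) \<le> Re (ip n (f b) (f b))"
      by (rule bessel[OF _ finN])
  qed
  also have "\<dots> = real (card I)" using F(1) unfolding orthon_def by simp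
  finally show ?thesis unfolding N_def by simp
qed

lemma reorder:
  assumes "N \<subseteq> {..<n}" "card N \<le> m"
  shows "\<exists>\<sigma>. bij_betw \<sigma> {..<n} {..<n} \<and> (\<forall>b<n. m \<le> b \<longrightarrow> \<sigma> b \<notin> N)"
proof -
  have finN: "finite N" using assms(1) finite_subset by blast
  define xs where "xs = sorted_list_of_set N @ sorted_list_of_set ({..<n} - N)"
  have d: "distinct xs" unfolding xs_def using finN by auto
  have st: "set xs = {..<n}" unfolding xs_def using finN assms(1) by auto
  have len: "length xs = n" using distinct_card[OF d] st by simp
  have lenN: "length (sorted_list_of_set N) = card N" by simp
  have "bij_betw ((!) xs) {..<n} {..<n}" using bij_betw_nth[OF d] len st by simp
  moreover have "\<forall>b<n. m \<le> b \<longrightarrow> xs ! b \<notin> N"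
  proof (intro allI impI)
    fix b assume b: "b < n" "m \<le> b"
    then have bN: "b \<ge> card N" using assms(2) by simp
    then have "xs ! b = sorted_list_of_set ({..<n} - N) ! (b - card N)"
      unfolding xs_def by (simp add: nth_append lenN)
    moreover have "b - card N < length (sorted_list_of_set ({..<n} - N))"
      using len b bN unfolding xs_def by simp
    ultimately have "xs ! b \<in> {..<n} - N" by (metis nth_mem set_sorted_list_of_set finite_Diff finite_lessThan)
    then show "xs ! b \<notin> N" by simp
  qed
  ultimately show ?thesis by blast
qed

lemma herm_decomp:
  assumes H: "herm n H" and flH: "flag \<Longrightarrow> \<forall>i<n. \<forall>j<n. Im (H i j) = 0"
    and F: "orthon n I f" "finite I" "card I \<le> m"
    and rng: "\<forall>v. inV n v \<longrightarrow> (\<exists>c. mv n H v = (\<lambda>i. \<Sum>b\<in>I. c b * f b i))"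
  shows "\<exists>Q d. orthon n {..<n} Q
     \<and> (\<forall>i<n. \<forall>j<n. (\<Sum>a<n. Q a i * cnj (Q a j)) = (if i = j then 1 else 0))
     \<and> (\<forall>i<n. \<forall>j<n. H i j = (\<Sum>a<n. Q a i * complex_of_real (d a) * cnj (Q a j)))
     \<and> (\<forall>a. m \<le> a \<longrightarrow> d a = 0)
     \<and> (flag \<longrightarrow> (\<forall>a i. Im (Q a i) = 0))"
proof -
  obtain q lam where q: "orthon n {..<n} q" "\<forall>a<n. mv n H (q a) = (\<lambda>i. complex_of_real (lam a) * q a i)"
    "flag \<longrightarrow> (\<forall>a<n. \<forall>i. Im (q a i) = 0)"
    "\<forall>i<n. \<forall>j<n. H i j = (\<Sum>a<n. q a i * complex_of_real (lam a) * cnj (q a j))"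
    using spectral[OF H flH] by blast
  define N where "N = {a. a < n \<and> lam a \<noteq> 0}"
  have "card N \<le> m" using rank_count[OF q(1,2) F(1,2) rng] F(3) unfolding N_def by simp
  then obtain \<sigma> where s: "bij_betw \<sigma> {..<n} {..<n}" "\<forall>b<n. m \<le> b \<longrightarrow> \<sigma> b \<notin> N"
    using reorder[of N n m] unfolding N_def by auto
  have sn: "b < n \<Longrightarrow> \<sigma> b < n" for b using s(1) unfolding bij_betw_def by auto
  have sinj: "inj_on \<sigma> {..<n}" using s(1) unfolding bij_betw_def by auto
  define Q where "Q a = (if a < n then q (\<sigma> a) else (\<lambda>i. 0))" for a
  define d where "d a = (if a < n then lam (\<sigma> a) else 0)" for a
  have "orthon n {..<n} Q" unfolding orthon_def
  proof (intro conjI ballI)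
    fix a b assume ab: "a \<in> {..<n}" "b \<in> {..<n}"
    then have "ip n (q (\<sigma> a)) (q (\<sigma> b)) = (if \<sigma> a = \<sigma> b then 1 else 0)"
      using q(1) sn unfolding orthon_def by auto
    moreover have "(\<sigma> a = \<sigma> b) = (a = b)" using sinj ab unfolding inj_on_def by auto
    ultimately show "ip n (Q a) (Q b) = (if a = b then 1 else 0)" using ab unfolding Q_def by simp
  next
    fix a assume "a \<in> {..<n}" then show "inV n (Q a)" using q(1) sn unfolding orthon_def Q_def by auto
  qed
  moreover have "\<forall>i<n. \<forall>j<n. (\<Sum>a<n. Q a i * cnj (Q a j)) = (if i = j then 1 else 0)"
  proof (intro allI impI)
    fix i j assume ij: "i < n" "j < n"
    have "(\<Sum>a<n. Q a i * cnj (Q a j)) = (\<Sum>a<n. q (\<sigma> a) i * cnj (q (\<sigma> a) j))"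
      unfolding Q_def by simp
    also have "\<dots> = (\<Sum>a<n. q a i * cnj (q a j))"
      by (rule sum.reindex_bij_betw[OF s(1), of "\<lambda>a. q a i * cnj (q a j)"])
    also have "\<dots> = (if i = j then 1 else 0)" by (rule completeness2[OF q(1) ij])
    finally show "(\<Sum>a<n. Q a i * cnj (Q a j)) = (if i = j then 1 else 0)" .
  qed
  moreover have "\<forall>i<n. \<forall>j<n. H i j = (\<Sum>a<n. Q a i * complex_of_real (d a) * cnj (Q a j))"
  proof (intro allI impI)
    fix i j assume ij: "i < n" "j < n"
    have "(\<Sum>a<n. Q a i * complex_of_real (d a) * cnj (Q a j)) = (\<Sum>a<n. q (\<sigma> a) i * complex_of_real (lam (\<sigma> a)) * cnj (q (\<sigma> a) j))"
      unfolding Q_def d_def by simp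
    also have "\<dots> = (\<Sum>a<n. q a i * complex_of_real (lam a) * cnj (q a j))"
      by (rule sum.reindex_bij_betw[OF s(1), of "\<lambda>a. q a i * complex_of_real (lam a) * cnj (q a j)"])
    finally show "H i j = (\<Sum>a<n. Q a i * complex_of_real (d a) * cnj (Q a j))" using q(4) ij by simp
  qed
  moreover have "\<forall>a. m \<le> a \<longrightarrow> d a = 0"
    using s(2) sn unfolding d_def N_def by auto
  moreover have "flag \<longrightarrow> (\<forall>a i. Im (Q a i) = 0)"
    using q(3) sn unfolding Q_def by auto
  ultimately show ?thesis by blast
qed

definition rou :: "nat \<Rightarrow> int \<Rightarrow> complex" where
  "rou k a = exp (\<i> * complex_of_real (2 * pi * real_of_int a / real k))"

lemma rou_add: "rou k (a + b) = rou k a * rou k b"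
proof -
  have "\<i> * complex_of_real (2 * pi * real_of_int (a + b) / real k) =
        \<i> * complex_of_real (2 * pi * real_of_int a / real k) + \<i> * complex_of_real (2 * pi * real_of_int b / real k)"
    by (simp add: add_divide_distrib distrib_left)
  then show ?thesis unfolding rou_def by (simp add: exp_add)
qed

lemma rou_period: assumes "k \<ge> 1" shows "rou k (a + int k * c) = rou k a"
proof -
  have "rou k (int k * c) = 1"
  proof -
    have "\<i> * complex_of_real (2 * pi * real_of_int (int k * c) / real k) = \<i> * (of_int c * (of_real pi * 2))"
      using assms by (simp add: field_simps)
    then have "rou k (int k * c) = exp (0 + \<i> * (of_int c * (of_real pi * 2)))" unfolding rou_def by simp
    also have "\<dots> = 1" by (subst exp_plus_2pin) simp
    finally show ?thesis .
  qed
  then show ?thesis by (simp add: rou_add)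
qed

lemma rou_cong: assumes "k \<ge> 1" "a mod int k = b mod int k" shows "rou k a = rou k b"
proof -
  have "a = b + int k * (a div int k - b div int k)"
  proof -
    have h1: "int k * (a div int k) + a mod int k = a" by (rule mult_div_mod_eq)
    have h2: "int k * (b div int k) + b mod int k = b" by (rule mult_div_mod_eq)
    have "a = b + (int k * (a div int k) - int k * (b div int k))" using h1 h2 assms(2) by linarith
    then show ?thesis by (simp add: right_diff_distrib)
  qed
  then have "rou k a = rou k (b + int k * (a div int k - b div int k))" by simp
  then show ?thesis using rou_period[OF assms(1)] by simp
qed

lemma rou_cnj: "cnj (rou k a) = rou k (- a)"
  unfolding rou_def by (simp add: exp_cnj)

lemma rou_norm: "cmod (rou k a) = 1"
  unfolding rou_def by (simp add: norm_exp_i_times)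

lemma rou_0 [simp]: "rou k 0 = 1"
  unfolding rou_def by simp

lemma rou_pow: "rou k (a * int j) = rou k a ^ j"
proof (induction j)
  case 0 then show ?case by simp
next
  case (Suc j)
  have "rou k (a * int (Suc j)) = rou k (a * int j + a)" by (simp add: algebra_simps)
  then show ?case using Suc by (simp add: rou_add)
qed

lemma rou_sum: assumes "k \<ge> 1"
  shows "(\<Sum>j<k. rou k (a * int j)) = (if int k dvd a then of_nat k else 0)"
proof (cases "int k dvd a")
  case True
  then obtain c where c: "a = int k * c" by blast
  have "rou k (a * int j) = 1" for j
    using rou_period[OF assms, of 0 "c * int j"] c by (simp add: mult_ac)
  then show ?thesis using True by simp
next
  case False
  define z where "z = rou k a"
  have z1: "z \<noteq> 1"
  proof
    assume "z = 1"
    then obtain m :: int where m: "Im (\<i> * complex_of_real (2 * pi * real_of_int a / real k)) = of_int (2 * m) * pi"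
      unfolding z_def rou_def exp_eq_1 by blast
    then have "2 * pi * real_of_int a / real k = of_int (2 * m) * pi" by simp
    then have "real_of_int a = real_of_int (int k * m)" using assms by (simp add: field_simps)
    then have "a = int k * m" by linarith
    then show False using False by simp
  qed
  have zk: "z ^ k = 1"
    unfolding z_def rou_pow[symmetric] using rou_period[OF assms, of 0 a] by (simp add: mult.commute)
  have "(\<Sum>j<k. rou k (a * int j)) = (\<Sum>j<k. z ^ j)" unfolding z_def by (simp add: rou_pow)
  also have "\<dots> = 0" using geometric_sum[OF z1, of k] zk by simp
  finally show ?thesis using False by simp
qed

lemma fslice_rou: "fslice k T j i i' = (\<Sum>j'<k. complex_of_real (T i i' j') * rou k (- (int j * int j')))"
  unfolding fslice_def rou_def by (simp add: algebra_simps)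

lemma orth_sum: assumes "k \<ge> 1" "a < k" "b < k"
  shows "(\<Sum>j<k. rou k ((int a - int b) * int j)) = (if a = b then of_nat k else 0)"
proof -
  have "int k dvd (int a - int b) \<longleftrightarrow> a = b"
  proof
    assume d: "int k dvd (int a - int b)"
    have "\<bar>int a - int b\<bar> < int k" using assms by linarith
    obtain c where c: "int a - int b = int k * c" using d by blast
    have "c = 0"
    proof (rule ccontr)
      assume "c \<noteq> 0"
      then have "c \<ge> 1 \<or> c \<le> -1" by linarith
      then show False
      proof
        assume "c \<ge> 1"
        then have "int k * 1 \<le> int k * c" by (intro mult_left_mono) auto
        then show False using c assms by linarith
      next
        assume "c \<le> -1"
        then have "int k * c \<le> int k * (-1)" by (intro mult_left_mono) auto
        then show False using c assms by linarith
      qed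
    qed
    then show "a = b" using c by simp
  qed simp
  then show ?thesis using rou_sum[OF assms(1)] by simp
qed

lemma rou_prod: "rou k (- (int l * int j)) * rou k (int m * int j) = rou k ((int m - int l) * int j)"
  by (simp add: rou_add[symmetric] algebra_simps)

lemma rou_mod_right: assumes "k \<ge> 1" shows "rou k (c * int (x mod k)) = rou k (c * int x)"
proof -
  have "int x = int k * int (x div k) + int (x mod k)" by (simp flip: of_nat_mult of_nat_add)
  then have "c * int x = c * int (x mod k) + int k * (c * int (x div k))" by (simp add: algebra_simps)
  then show ?thesis using rou_period[OF assms] by simp
qed

lemma rou_negmod: assumes "k \<ge> 1" "j < k" shows "rou k (c * int ((k - j) mod k)) = rou k (- (c * int j))"
proof (cases "j = 0")
  case True then show ?thesis by simp
next
  case False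
  then have "(k - j) mod k = k - j" using assms by simp
  moreover have "c * int (k - j) = - (c * int j) + int k * c" using assms by (simp add: of_nat_diff algebra_simps)
  ultimately have eq: "c * int ((k - j) mod k) = - (c * int j) + int k * c" by simp
  show ?thesis unfolding eq by (rule rou_period[OF assms(1)])
qed

lemma cidx_bij: fixes k :: nat assumes "k \<ge> 1" shows "bij_betw (\<lambda>l. (k - l) mod k) {..<k} {..<k}"
proof (rule bij_betw_byWitness[where f' = "\<lambda>l. (k - l) mod k"])
  show "\<forall>a\<in>{..<k}. (k - (k - a) mod k) mod k = a"
  proof
    fix a assume "a \<in> {..<k}"
    then show "(k - (k - a) mod k) mod k = a" by (cases "a = 0") auto
  qed
  then show "\<forall>a\<in>{..<k}. (k - (k - a) mod k) mod k = a" .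
qed (use assms in auto)

lemma shift_bij: fixes k :: nat assumes "k \<ge> 1" "j' < k" shows "bij_betw (\<lambda>j. (j + k - j') mod k) {..<k} {..<k}"
proof (rule bij_betw_byWitness[where f' = "\<lambda>j. (j + j') mod k"])
  show "\<forall>a\<in>{..<k}. ((a + k - j') mod k + j') mod k = a"
  proof
    fix a assume a: "a \<in> {..<k}"
    have "((a + k - j') mod k + j') mod k = (a + k - j' + j') mod k" by (rule mod_add_left_eq)
    also have "a + k - j' + j' = a + k" using assms by simp
    finally show "((a + k - j') mod k + j') mod k = a" using a by simp
  qed
  show "\<forall>a\<in>{..<k}. ((a + j') mod k + k - j') mod k = a"
  proof
    fix a assume a: "a \<in> {..<k}"
    have "((a + j') mod k + k - j') mod k = ((a + j') mod k + (k - j')) mod k" using assms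
      by (simp add: add_diff_assoc)
    also have "\<dots> = (a + j' + (k - j')) mod k" by (rule mod_add_left_eq)
    also have "a + j' + (k - j') = a + k" using assms by simp
    finally show "((a + j') mod k + k - j') mod k = a" using a by simp
  qed
qed (use assms in auto)

lemma conv_shift: assumes k: "k \<ge> 1" and j': "j' < k"
  shows "(\<Sum>j<k. g ((j + k - j') mod k) * rou k (- (int l * int j)))
       = rou k (- (int l * int j')) * (\<Sum>j<k. g j * rou k (- (int l * int j)))"
proof -
  define h where "h j = (j + k - j') mod k" for j
  have hj: "rou k (- (int l * int j)) = rou k (- (int l * int j')) * rou k (- (int l * int (h j)))" if "j < k" for j
  proof -
    have "(h j + j') mod k = j"
    proof -
      have "(h j + j') mod k = (j + k - j' + j') mod k" unfolding h_def by (rule mod_add_left_eq)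
      also have "j + k - j' + j' = j + k" using j' by simp
      finally show ?thesis using that by simp
    qed
    then have "rou k (- (int l * int j)) = rou k ((- int l) * int ((h j + j') mod k))" by simp
    also have "\<dots> = rou k ((- int l) * int (h j + j'))" by (rule rou_mod_right[OF k])
    also have "\<dots> = rou k (- (int l * int j') + - (int l * int (h j)))" by (simp add: algebra_simps)
    finally show ?thesis by (simp only: rou_add)
  qed
  have "(\<Sum>j<k. g (h j) * rou k (- (int l * int j))) = (\<Sum>j<k. (\<lambda>x. g x * (rou k (- (int l * int j')) * rou k (- (int l * int x)))) (h j))"
    using hj by (intro sum.cong) auto
  also have "\<dots> = (\<Sum>x<k. g x * (rou k (- (int l * int j')) * rou k (- (int l * int x))))"
    by (rule sum.reindex_bij_betw[OF shift_bij[OF k j'], unfolded h_def[symmetric]])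
  also have "\<dots> = rou k (- (int l * int j')) * (\<Sum>j<k. g j * rou k (- (int l * int j)))"
    by (simp add: sum_distrib_left mult_ac)
  finally show ?thesis unfolding h_def .
qed

lemma fslice_tprod: assumes k: "k \<ge> 1" and i: "i < n" "i' < n"
  shows "fslice k (tprod n k A B) l i i' = (\<Sum>p<n. fslice k A l i p * fslice k B l p i')"
proof -
  have "fslice k (tprod n k A B) l i i' =
     (\<Sum>j<k. \<Sum>p<n. \<Sum>j'<k. complex_of_real (A i p j') * (complex_of_real (B p i' ((j + k - j') mod k)) * rou k (- (int l * int j))))"
    unfolding fslice_rou tprod_def using i by (simp add: sum_distrib_right mult.assoc)
  also have "\<dots> = (\<Sum>p<n. \<Sum>j'<k. \<Sum>j<k. complex_of_real (A i p j') * (complex_of_real (B p i' ((j + k - j') mod k)) * rou k (- (int l * int j))))"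
    by (subst sum.swap, rule sum.cong, simp, rule sum.swap)
  also have "\<dots> = (\<Sum>p<n. \<Sum>j'<k. complex_of_real (A i p j') * (rou k (- (int l * int j')) * fslice k B l p i'))"
  proof (intro sum.cong refl)
    fix p j' assume j': "j' \<in> {..<k}"
    have "(\<Sum>j<k. complex_of_real (A i p j') * (complex_of_real (B p i' ((j + k - j') mod k)) * rou k (- (int l * int j))))
        = complex_of_real (A i p j') * (\<Sum>j<k. complex_of_real (B p i' ((j + k - j') mod k)) * rou k (- (int l * int j)))"
      by (simp add: sum_distrib_left)
    also have "\<dots> = complex_of_real (A i p j') * (rou k (- (int l * int j')) * fslice k B l p i')"
      unfolding fslice_rou using conv_shift[OF k, of j' "\<lambda>x. complex_of_real (B p i' x)" l] j' by simp
    finally show "(\<Sum>j<k. complex_of_real (A i p j') * (complex_of_real (B p i' ((j + k - j') mod k)) * rou k (- (int l * int j))))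
        = complex_of_real (A i p j') * (rou k (- (int l * int j')) * fslice k B l p i')" .
  qed
  also have "\<dots> = (\<Sum>p<n. fslice k A l i p * fslice k B l p i')"
    unfolding fslice_rou[of k A] by (simp add: sum_distrib_left sum_distrib_right mult_ac)
  finally show ?thesis .
qed

lemma fslice_ttrans: assumes k: "k \<ge> 1" and i: "i < n" "i' < n"
  shows "fslice k (ttrans n k T) l i i' = cnj (fslice k T l i' i)"
proof -
  define c where "c j = (k - j) mod k" for j
  have "fslice k (ttrans n k T) l i i' = (\<Sum>j<k. complex_of_real (T i' i (c j)) * rou k (- (int l * int j)))"
    unfolding fslice_rou ttrans_def c_def using i by simp
  also have "\<dots> = (\<Sum>j<k. (\<lambda>x. complex_of_real (T i' i x) * rou k (int l * int x)) (c j))"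
  proof (intro sum.cong refl)
    fix j assume j: "j \<in> {..<k}"
    have "rou k (int l * int (c j)) = rou k (- (int l * int j))" unfolding c_def by (rule rou_negmod[OF k]) (use j in simp)
    then show "complex_of_real (T i' i (c j)) * rou k (- (int l * int j)) = (\<lambda>x. complex_of_real (T i' i x) * rou k (int l * int x)) (c j)"
      by simp
  qed
  also have "\<dots> = (\<Sum>x<k. complex_of_real (T i' i x) * rou k (int l * int x))"
    by (rule sum.reindex_bij_betw[OF cidx_bij[OF k], unfolded c_def[symmetric]])
  also have "\<dots> = cnj (fslice k T l i' i)"
    unfolding fslice_rou by (simp add: cnj_sum rou_cnj)
  finally show ?thesis .
qed

lemma fslice_cidx: assumes k: "k \<ge> 1" and l: "l < k"
  shows "fslice k T ((k - l) mod k) i i' = cnj (fslice k T l i i')"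
proof -
  have "rou k (- (int ((k - l) mod k) * int j)) = rou k (int l * int j)" for j
  proof -
    have "rou k (- (int ((k - l) mod k) * int j)) = rou k ((- int j) * int ((k - l) mod k))" by (simp add: algebra_simps)
    also have "\<dots> = rou k (- ((- int j) * int l))" by (rule rou_negmod[OF k l])
    finally show ?thesis by (simp add: mult.commute)
  qed
  then show ?thesis unfolding fslice_rou by (simp add: cnj_sum rou_cnj)
qed

lemma fslice_tid: assumes k: "k \<ge> 1" and i: "i < n" "i' < n"
  shows "fslice k (tid n k) l i i' = (if i = i' then 1 else 0)"
proof -
  have "fslice k (tid n k) l i i' = (\<Sum>j'<k. if j' = 0 then (if i = i' then 1 else 0) else 0)"
    unfolding fslice_rou tid_def using i by (intro sum.cong) auto
  also have "\<dots> = (if i = i' then 1 else 0)" using k by (simp add: sum.delta)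
  finally show ?thesis .
qed

lemma fslice_lin: "fslice k (\<lambda>i i' j. a * X i i' j + b * Y i i' j) l i i'
   = complex_of_real a * fslice k X l i i' + complex_of_real b * fslice k Y l i i'"
  unfolding fslice_rou by (simp add: sum.distrib sum_distrib_left distrib_right mult.assoc)

definition itens :: "nat \<Rightarrow> nat \<Rightarrow> (nat \<Rightarrow> nat \<Rightarrow> nat \<Rightarrow> complex) \<Rightarrow> tensor" where
  "itens n k F = (\<lambda>i i' j. if i < n \<and> i' < n \<and> j < k
      then Re ((\<Sum>l<k. F l i i' * rou k (int l * int j)) / of_nat k) else 0)"

definition csym :: "nat \<Rightarrow> nat \<Rightarrow> (nat \<Rightarrow> nat \<Rightarrow> nat \<Rightarrow> complex) \<Rightarrow> bool" where
  "csym n k F \<longleftrightarrow> (\<forall>l<k. \<forall>i<n. \<forall>i'<n. F ((k - l) mod k) i i' = cnj (F l i i'))"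

lemma valid_itens: "valid_tensor n k (itens n k F)"
  unfolding valid_tensor_def itens_def by auto

lemma itens_sum_real: assumes k: "k \<ge> 1" and F: "csym n k F" and i: "i < n" "i' < n"
  shows "cnj (\<Sum>l<k. F l i i' * rou k (int l * int j)) = (\<Sum>l<k. F l i i' * rou k (int l * int j))"
proof -
  define c where "c l = (k - l) mod k" for l
  have cc: "c (c l) = l" if "l < k" for l
    unfolding c_def using that by (cases "l = 0") auto
  have "cnj (\<Sum>l<k. F l i i' * rou k (int l * int j)) = (\<Sum>l<k. F (c l) i i' * rou k (- (int l * int j)))"
    unfolding cnj_sum using F i unfolding csym_def c_def by (intro sum.cong) (auto simp: rou_cnj)
  also have "\<dots> = (\<Sum>l<k. (\<lambda>x. F x i i' * rou k (- (int (c x) * int j))) (c l))"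
    using cc by (intro sum.cong) auto
  also have "\<dots> = (\<Sum>x<k. F x i i' * rou k (- (int (c x) * int j)))"
    by (rule sum.reindex_bij_betw[OF cidx_bij[OF k], unfolded c_def[symmetric]])
  also have "\<dots> = (\<Sum>l<k. F l i i' * rou k (int l * int j))"
  proof (intro sum.cong refl)
    fix x assume x: "x \<in> {..<k}"
    have "rou k (- (int (c x) * int j)) = rou k ((- int j) * int ((k - x) mod k))" unfolding c_def by (simp add: algebra_simps)
    also have "\<dots> = rou k (- ((- int j) * int x))" by (rule rou_negmod[OF k]) (use x in simp)
    finally show "F x i i' * rou k (- (int (c x) * int j)) = F x i i' * rou k (int x * int j)" by (simp add: mult.commute)
  qed
  finally show ?thesis .
qed

lemma gen_distr: "(\<Sum>l\<in>L. F l * r l) / (c::complex) * b = (\<Sum>l\<in>L. F l * (b * r l)) / c"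
  by (simp only: times_divide_eq_left sum_distrib_right) (simp only: mult_ac)

lemma fslice_itens: assumes k: "k \<ge> 1" and F: "csym n k F" and i: "i < n" "i' < n" and l0: "l0 < k"
  shows "fslice k (itens n k F) l0 i i' = F l0 i i'"
proof -
  have re: "complex_of_real (itens n k F i i' j) = (\<Sum>l<k. F l i i' * rou k (int l * int j)) / of_nat k" if "j < k" for j
  proof -
    let ?S = "\<Sum>l<k. F l i i' * rou k (int l * int j)"
    have "?S = complex_of_real (Re ?S)" by (rule cnj_eq_real[OF itens_sum_real[OF k F i]])
    then obtain r where r: "?S = complex_of_real r" by blast
    have "complex_of_real (Re (?S / of_nat k)) = ?S / of_nat k"
      unfolding r by simp
    then show ?thesis unfolding itens_def using that i by simp
  qed
  have "fslice k (itens n k F) l0 i i' = (\<Sum>j<k. (\<Sum>l<k. F l i i' * rou k (int l * int j)) / of_nat k * rou k (- (int l0 * int j)))"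
    unfolding fslice_rou using re by (intro sum.cong) auto
  also have "\<dots> = (\<Sum>l<k. F l i i' * (\<Sum>j<k. rou k ((int l - int l0) * int j))) / of_nat k"
  proof -
    have "(\<Sum>j<k. (\<Sum>l<k. F l i i' * rou k (int l * int j)) / of_nat k * rou k (- (int l0 * int j)))
       = (\<Sum>j<k. \<Sum>l<k. F l i i' * (rou k (- (int l0 * int j)) * rou k (int l * int j))) / of_nat k"
    proof -
      have "(\<Sum>j<k. (\<Sum>l<k. F l i i' * rou k (int l * int j)) / of_nat k * rou k (- (int l0 * int j)))
        = (\<Sum>j<k. (\<Sum>l<k. F l i i' * (rou k (- (int l0 * int j)) * rou k (int l * int j))) / of_nat k)"
        by (intro sum.cong refl) (rule gen_distr)
      also have "\<dots> = (\<Sum>j<k. \<Sum>l<k. F l i i' * (rou k (- (int l0 * int j)) * rou k (int l * int j))) / of_nat k"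
        by (rule sum_divide_distrib[symmetric])
      finally show ?thesis .
    qed
    also have "\<dots> = (\<Sum>l<k. \<Sum>j<k. F l i i' * rou k ((int l - int l0) * int j)) / of_nat k"
      by (subst sum.swap) (simp add: rou_prod)
    also have "\<dots> = (\<Sum>l<k. F l i i' * (\<Sum>j<k. rou k ((int l - int l0) * int j))) / of_nat k"
      by (simp add: sum_distrib_left)
    finally show ?thesis .
  qed
  also have "\<dots> = (\<Sum>l<k. if l = l0 then F l i i' * of_nat k else 0) / of_nat k"
    using orth_sum[OF k] l0 by (intro arg_cong[where f = "\<lambda>x. x / of_nat k"] sum.cong) auto
  also have "\<dots> = F l0 i i'" using l0 k by simp
  finally show ?thesis .
qed

lemma rou_prod2: "rou k (- (int l * int j')) * rou k (int l * int j) = rou k ((int j - int j') * int l)"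
proof -
  have "- (int l * int j') + int l * int j = (int j - int j') * int l" by (simp add: algebra_simps)
  then show ?thesis by (metis rou_add)
qed

lemma dft_inv: assumes k: "k \<ge> 1" and i: "i < n" "i' < n" and j: "j < k"
  shows "T i i' j = Re ((\<Sum>l<k. fslice k T l i i' * rou k (int l * int j)) / of_nat k)"
proof -
  have "(\<Sum>l<k. fslice k T l i i' * rou k (int l * int j))
      = (\<Sum>l<k. \<Sum>j'<k. complex_of_real (T i i' j') * (rou k (- (int l * int j')) * rou k (int l * int j)))"
    unfolding fslice_rou by (simp add: sum_distrib_right mult.assoc)
  also have "\<dots> = (\<Sum>j'<k. complex_of_real (T i i' j') * (\<Sum>l<k. rou k ((int j - int j') * int l)))"
    by (subst sum.swap) (simp add: sum_distrib_left rou_prod2)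
  also have "\<dots> = (\<Sum>j'<k. if j' = j then complex_of_real (T i i' j') * of_nat k else 0)"
    using orth_sum[OF k j] by (intro sum.cong) auto
  also have "\<dots> = complex_of_real (T i i' j) * of_nat k" using j by simp
  finally show ?thesis using k by simp
qed

lemma dft_inj: assumes k: "k \<ge> 1" and v: "valid_tensor n k T" "valid_tensor n k T'"
  and eq: "\<forall>l<k. \<forall>i<n. \<forall>i'<n. fslice k T l i i' = fslice k T' l i i'"
  shows "T = T'"
proof (intro ext)
  fix i i' j
  show "T i i' j = T' i i' j"
  proof (cases "i < n \<and> i' < n \<and> j < k")
    case True
    then have "(\<Sum>l<k. fslice k T l i i' * rou k (int l * int j)) = (\<Sum>l<k. fslice k T' l i i' * rou k (int l * int j))"
      using eq by (intro sum.cong) auto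
    then show ?thesis using dft_inv[OF k, of i n i' j T] dft_inv[OF k, of i n i' j T'] True by simp
  next
    case False then show ?thesis using v unfolding valid_tensor_def by auto
  qed
qed

lemma valid_tprod: "valid_tensor n k (tprod n k A B)"
  unfolding valid_tensor_def tprod_def by auto

lemma valid_ttrans: "valid_tensor n k (ttrans n k A)"
  unfolding valid_tensor_def ttrans_def by auto

lemma valid_tid: "valid_tensor n k (tid n k)"
  unfolding valid_tensor_def tid_def by auto

lemma herm_slice: assumes k: "k \<ge> 1" and X: "X \<in> tsym n k"
  shows "herm n (fslice k X l)"
  unfolding herm_def
proof (intro allI impI)
  fix i j assume ij: "i < n" "j < n"
  have "ttrans n k X = X" using X unfolding tsym_def by auto
  then have "fslice k X l j i = fslice k (ttrans n k X) l j i" by simp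
  also have "\<dots> = cnj (fslice k X l i j)" by (rule fslice_ttrans[OF k ij(2) ij(1)])
  finally show "fslice k X l j i = cnj (fslice k X l i j)" .
qed

lemma real_slice: assumes k: "k \<ge> 1" and l: "l < k" "(k - l) mod k = l"
  shows "Im (fslice k X l i j) = 0"
proof -
  have "fslice k X l i j = cnj (fslice k X l i j)" using fslice_cidx[OF k l(1), of X i j] l(2) by simp
  then show ?thesis by (metis cnj.simps(2) neg_equal_zero)
qed

lemma ip_cnj_vec: "ip n (\<lambda>i. cnj (u i)) (\<lambda>i. cnj (v i)) = cnj (ip n u v)"
  unfolding ip_def by (simp add: cnj_sum)

lemma cnj_real: "Im z = 0 \<Longrightarrow> cnj z = z"
  by (simp add: complex_eq_iff)

definition decomp_ok :: "nat \<Rightarrow> nat \<Rightarrow> (nat \<Rightarrow> nat \<Rightarrow> complex) \<Rightarrow> (nat \<Rightarrow> nat \<Rightarrow> complex) \<Rightarrow> (nat \<Rightarrow> real) \<Rightarrow> bool" where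
  "decomp_ok n m H Q d \<longleftrightarrow> orthon n {..<n} Q
     \<and> (\<forall>i<n. \<forall>j<n. (\<Sum>a<n. Q a i * cnj (Q a j)) = (if i = j then 1 else 0))
     \<and> (\<forall>i<n. \<forall>j<n. H i j = (\<Sum>a<n. Q a i * complex_of_real (d a) * cnj (Q a j)))
     \<and> (\<forall>a. m \<le> a \<longrightarrow> d a = 0)"

lemma decomp_ok_cnj:
  assumes "decomp_ok n m H Q d"
  shows "decomp_ok n m (\<lambda>i j. cnj (H i j)) (\<lambda>a i. cnj (Q a i)) d"
  unfolding decomp_ok_def
proof (intro conjI)
  have o: "orthon n {..<n} Q" using assms unfolding decomp_ok_def by simp
  show "orthon n {..<n} (\<lambda>a i. cnj (Q a i))"
    using o unfolding orthon_def inV_def by (simp add: ip_cnj_vec)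
  show "\<forall>i<n. \<forall>j<n. (\<Sum>a<n. cnj (Q a i) * cnj (cnj (Q a j))) = (if i = j then 1 else 0)"
  proof (intro allI impI)
    fix i j assume "i < n" "j < n"
    then have "(\<Sum>a<n. Q a i * cnj (Q a j)) = (if i = j then 1 else 0)" using assms unfolding decomp_ok_def by blast
    then have "cnj (\<Sum>a<n. Q a i * cnj (Q a j)) = (if i = j then 1 else 0)" by simp
    then show "(\<Sum>a<n. cnj (Q a i) * cnj (cnj (Q a j))) = (if i = j then 1 else 0)" by (simp add: cnj_sum)
  qed
  show "\<forall>i<n. \<forall>j<n. cnj (H i j) = (\<Sum>a<n. cnj (Q a i) * complex_of_real (d a) * cnj (cnj (Q a j)))"
  proof (intro allI impI)
    fix i j assume "i < n" "j < n"
    then have "H i j = (\<Sum>a<n. Q a i * complex_of_real (d a) * cnj (Q a j))" using assms unfolding decomp_ok_def by blast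
    then show "cnj (H i j) = (\<Sum>a<n. cnj (Q a i) * complex_of_real (d a) * cnj (cnj (Q a j)))" by (simp add: cnj_sum)
  qed
  show "\<forall>a. m \<le> a \<longrightarrow> d a = 0" using assms unfolding decomp_ok_def by simp
qed

lemma build_tsvd:
  assumes k: "k \<ge> 1" and X: "X \<in> tsym n k"
    and gen: "\<forall>l<k. \<exists>I f. orthon n I f \<and> finite I \<and> card I \<le> m \<and>
        (\<forall>v. inV n v \<longrightarrow> (\<exists>c. mv n (fslice k X l) v = (\<lambda>i. \<Sum>b\<in>I. c b * f b i)))"
  shows "\<exists>U S. is_tsvd n k X U S U \<and> nonzero_tubes n k S \<le> m"
proof -
  define c where "c l = (k - l) mod k" for l
  have cc: "c (c l) = l" if "l < k" for l
    unfolding c_def using that by (cases "l = 0") auto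
  have ck: "c l < k" for l unfolding c_def using k by simp
  have ex: "\<exists>p. decomp_ok n m (fslice k X l) (fst p) (snd p) \<and> (c l = l \<longrightarrow> (\<forall>a i. Im (fst p a i) = 0))"
    if l: "l < k" for l
  proof -
    obtain I f where F: "orthon n I f" "finite I" "card I \<le> m"
      "\<forall>v. inV n v \<longrightarrow> (\<exists>c. mv n (fslice k X l) v = (\<lambda>i. \<Sum>b\<in>I. c b * f b i))"
      using gen l by blast
    have fl: "\<forall>i<n. \<forall>j<n. Im (fslice k X l i j) = 0" if "c l = l"
      using real_slice[OF k l] that unfolding c_def by blast
    obtain Q d where "decomp_ok n m (fslice k X l) Q d" "c l = l \<longrightarrow> (\<forall>a i. Im (Q a i) = 0)"
      using herm_decomp[OF herm_slice[OF k X] fl F] unfolding decomp_ok_def by blast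
    then show ?thesis by (intro exI[of _ "(Q, d)"]) simp
  qed
  obtain g where g: "\<forall>l\<in>{..<k}. decomp_ok n m (fslice k X l) (fst (g l)) (snd (g l)) \<and> (c l = l \<longrightarrow> (\<forall>a i. Im (fst (g l) a i) = 0))"
    using bchoice[of "{..<k}"] ex by (metis lessThan_iff)
  define Q where "Q l = (if l \<le> c l then fst (g l) else (\<lambda>a i. cnj (fst (g (c l)) a i)))" for l
  define d where "d l = (if l \<le> c l then snd (g l) else snd (g (c l)))" for l
  have Qd: "decomp_ok n m (fslice k X l) (Q l) (d l)" if l: "l < k" for l
  proof (cases "l \<le> c l")
    case True then show ?thesis using g l unfolding Q_def d_def by simp
  next
    case False
    have "decomp_ok n m (fslice k X (c l)) (fst (g (c l))) (snd (g (c l)))" using g ck by blast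
    then have "decomp_ok n m (\<lambda>i j. cnj (fslice k X (c l) i j)) (\<lambda>a i. cnj (fst (g (c l)) a i)) (snd (g (c l)))"
      by (rule decomp_ok_cnj)
    moreover have "(\<lambda>i j. cnj (fslice k X (c l) i j)) = fslice k X l"
    proof (intro ext)
      fix i j
      have "fslice k X (c (c l)) i j = cnj (fslice k X (c l) i j)" unfolding c_def[of "c l"] by (rule fslice_cidx[OF k ck])
      then show "cnj (fslice k X (c l) i j) = fslice k X l i j" using cc[OF l] by simp
    qed
    ultimately show ?thesis using False unfolding Q_def d_def by simp
  qed
  have Qsym: "Q (c l) a i = cnj (Q l a i)" if l: "l < k" for l a i
  proof -
    consider "l < c l" | "l = c l" | "c l < l" by linarith
    then show ?thesis
    proof cases
      case 1
      then have "\<not> c l \<le> c (c l)" using cc[OF l] by simp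
      then show ?thesis using 1 cc[OF l] unfolding Q_def by simp
    next
      case 2
      then have "Im (fst (g l) a i) = 0" using g l by auto
      then show ?thesis using 2 unfolding Q_def by (simp add: cnj_real)
    next
      case 3
      then have "c l \<le> c (c l)" using cc[OF l] by simp
      then show ?thesis using 3 unfolding Q_def by simp
    qed
  qed
  have dsym: "d (c l) = d l" if l: "l < k" for l
  proof -
    consider "l < c l" | "l = c l" | "c l < l" by linarith
    then show ?thesis
    proof cases
      case 1
      then have "\<not> c l \<le> c (c l)" using cc[OF l] by simp
      then show ?thesis using 1 cc[OF l] unfolding d_def by simp
    next
      case 2 then show ?thesis by simp
    next
      case 3
      then have "c l \<le> c (c l)" using cc[OF l] by simp
      then show ?thesis using 3 unfolding d_def by simp
    qed
  qed
  define Uf where "Uf l i a = Q l a i" for l i a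
  define Sf where "Sf l i i' = (if i = i' then complex_of_real (d l i) else 0)" for l i i'
  have csU: "csym n k Uf" unfolding csym_def Uf_def using Qsym unfolding c_def by simp
  have csS: "csym n k Sf" unfolding csym_def Sf_def using dsym unfolding c_def by simp
  define U where "U = itens n k Uf"
  define S where "S = itens n k Sf"
  have fU: "fslice k U l i a = Q l a i" if "l < k" "i < n" "a < n" for l i a
    unfolding U_def using fslice_itens[OF k csU that(2,3) that(1)] unfolding Uf_def .
  have fS: "fslice k S l i i' = (if i = i' then complex_of_real (d l i) else 0)" if "l < k" "i < n" "i' < n" for l i i'
    unfolding S_def using fslice_itens[OF k csS that(2,3) that(1)] unfolding Sf_def .
  have torth: "torth n k U"
    unfolding torth_def
  proof (intro conjI)
    show "valid_tensor n k U" unfolding U_def by (rule valid_itens)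
    show "tprod n k (ttrans n k U) U = tid n k"
    proof (rule dft_inj[OF k valid_tprod valid_tid], intro allI impI)
      fix l i i' assume l: "l < k" and i: "i < n" "i' < n"
      have "fslice k (tprod n k (ttrans n k U) U) l i i' = (\<Sum>p<n. fslice k (ttrans n k U) l i p * fslice k U l p i')"
        by (rule fslice_tprod[OF k i])
      also have "\<dots> = (\<Sum>p<n. cnj (Q l i p) * Q l i' p)"
        using fslice_ttrans[OF k] fU l i by (intro sum.cong) auto
      also have "\<dots> = ip n (Q l i) (Q l i')" unfolding ip_def ..
      also have "\<dots> = (if i = i' then 1 else 0)" using Qd[OF l] i unfolding decomp_ok_def orthon_def by auto
      also have "\<dots> = fslice k (tid n k) l i i'" using fslice_tid[OF k i] by simp
      finally show "fslice k (tprod n k (ttrans n k U) U) l i i' = fslice k (tid n k) l i i'" .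
    qed
    show "tprod n k U (ttrans n k U) = tid n k"
    proof (rule dft_inj[OF k valid_tprod valid_tid], intro allI impI)
      fix l i i' assume l: "l < k" and i: "i < n" "i' < n"
      have "fslice k (tprod n k U (ttrans n k U)) l i i' = (\<Sum>p<n. fslice k U l i p * fslice k (ttrans n k U) l p i')"
        by (rule fslice_tprod[OF k i])
      also have "\<dots> = (\<Sum>p<n. Q l p i * cnj (Q l p i'))"
        using fslice_ttrans[OF k] fU l i by (intro sum.cong) auto
      also have "\<dots> = (if i = i' then 1 else 0)" using Qd[OF l] i unfolding decomp_ok_def by auto
      also have "\<dots> = fslice k (tid n k) l i i'" using fslice_tid[OF k i] by simp
      finally show "fslice k (tprod n k U (ttrans n k U)) l i i' = fslice k (tid n k) l i i'" .
    qed
  qed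
  have fdiag: "fdiag n k S"
    unfolding fdiag_def
  proof (intro conjI allI impI)
    show "valid_tensor n k S" unfolding S_def by (rule valid_itens)
    fix i i' j :: nat assume "i \<noteq> i'"
    then show "S i i' j = 0" unfolding S_def itens_def Sf_def by simp
  qed
  have vX: "valid_tensor n k X" using X unfolding tsym_def by simp
  have XU: "X = tprod n k (tprod n k U S) (ttrans n k U)"
  proof (rule dft_inj[OF k vX valid_tprod], intro allI impI)
    fix l i i' assume l: "l < k" and i: "i < n" "i' < n"
    have inner: "fslice k (tprod n k U S) l i p = Q l p i * complex_of_real (d l p)" if p: "p < n" for p
    proof -
      have "fslice k (tprod n k U S) l i p = (\<Sum>q<n. fslice k U l i q * fslice k S l q p)"
        by (rule fslice_tprod[OF k i(1) p])
      also have "\<dots> = (\<Sum>q<n. if q = p then Q l p i * complex_of_real (d l p) else 0)"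
        using fU fS l i p by (intro sum.cong) auto
      also have "\<dots> = Q l p i * complex_of_real (d l p)" using p by simp
      finally show ?thesis .
    qed
    have "fslice k (tprod n k (tprod n k U S) (ttrans n k U)) l i i'
        = (\<Sum>p<n. fslice k (tprod n k U S) l i p * fslice k (ttrans n k U) l p i')"
      by (rule fslice_tprod[OF k i])
    also have "\<dots> = (\<Sum>p<n. Q l p i * complex_of_real (d l p) * cnj (Q l p i'))"
      using inner fslice_ttrans[OF k] fU l i by (intro sum.cong) auto
    also have "\<dots> = fslice k X l i i'" using Qd[OF l] i unfolding decomp_ok_def by auto
    finally show "fslice k X l i i' = fslice k (tprod n k (tprod n k U S) (ttrans n k U)) l i i'" by simp
  qed
  have nz: "nonzero_tubes n k S \<le> m"
  proof -
    have "{i. i < n \<and> (\<exists>j<k. S i i j \<noteq> 0)} \<subseteq> {..<m}"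
    proof
      fix i assume "i \<in> {i. i < n \<and> (\<exists>j<k. S i i j \<noteq> 0)}"
      then obtain j where ij: "i < n" "j < k" "S i i j \<noteq> 0" by auto
      show "i \<in> {..<m}"
      proof (rule ccontr)
        assume "i \<notin> {..<m}"
        then have mi: "m \<le> i" by simp
        have dl: "d l i = 0" if "l < k" for l using Qd[OF that] mi unfolding decomp_ok_def by blast
        have "(\<Sum>l<k. Sf l i i * rou k (int l * int j)) = 0"
          by (intro sum.neutral ballI) (simp add: Sf_def dl)
        then have "S i i j = 0" unfolding S_def itens_def by simp
        then show False using ij by simp
      qed
    qed
    then have "card {i. i < n \<and> (\<exists>j<k. S i i j \<noteq> 0)} \<le> card {..<m}" by (intro card_mono) auto
    then show ?thesis unfolding nonzero_tubes_def by simp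
  qed
  have "is_tsvd n k X U S U" unfolding is_tsvd_def using torth fdiag XU by simp
  then show ?thesis using nz by blast
qed

lemma tubal_rank_le:
  assumes k: "k \<ge> 1" and X: "X \<in> tsym n k"
    and gen: "\<forall>l<k. \<exists>I f. orthon n I f \<and> finite I \<and> card I \<le> m \<and>
        (\<forall>v. inV n v \<longrightarrow> (\<exists>c. mv n (fslice k X l) v = (\<lambda>i. \<Sum>b\<in>I. c b * f b i)))"
  shows "tubal_rank n k X \<le> m"
proof -
  obtain U S where US: "is_tsvd n k X U S U" "nonzero_tubes n k S \<le> m"
    using build_tsvd[OF k X gen] by blast
  have "tubal_rank n k X \<le> nonzero_tubes n k S"
    unfolding tubal_rank_def by (rule Least_le) (use US(1) in blast)
  then show ?thesis using US(2) by simp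
qed

lemma orthon_ev: "orthon n {..<n} ev"
  unfolding orthon_def
proof (intro conjI ballI)
  fix a b assume ab: "a \<in> {..<n}" "b \<in> {..<n}"
  have "ip n (ev a) (ev b) = cnj (ev a b)" by (rule ip_ev_right) (use ab in simp)
  then show "ip n (ev a) (ev b) = (if a = b then 1 else 0)" by (simp add: ev_def)
next
  fix a assume "a \<in> {..<n}" then show "inV n (ev a)" by (simp add: inV_ev)
qed

lemma span_ev: assumes "inV n w" shows "w = (\<lambda>i. \<Sum>b<n. w b * ev b i)"
proof
  fix i show "w i = (\<Sum>b<n. w b * ev b i)"
    using assms unfolding inV_def ev_def by (cases "i < n") (auto simp: if_distrib cong: if_cong)
qed

lemma tsvd_exists:
  assumes k: "k \<ge> 1" and X: "X \<in> tsym n k"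
  shows "\<exists>U S V. is_tsvd n k X U S V"
proof -
  have "\<forall>l<k. \<exists>I f. orthon n I f \<and> finite I \<and> card I \<le> n \<and>
        (\<forall>v. inV n v \<longrightarrow> (\<exists>c. mv n (fslice k X l) v = (\<lambda>i. \<Sum>b\<in>I. c b * f b i)))"
  proof (intro allI impI)
    fix l
    have "orthon n {..<n} ev \<and> finite {..<n} \<and> card {..<n} \<le> n \<and>
        (\<forall>v. inV n v \<longrightarrow> (\<exists>c. mv n (fslice k X l) v = (\<lambda>i. \<Sum>b\<in>{..<n}. c b * ev b i)))"
    proof (intro conjI allI impI)
      fix v :: "nat \<Rightarrow> complex"
      show "\<exists>c. mv n (fslice k X l) v = (\<lambda>i. \<Sum>b\<in>{..<n}. c b * ev b i)"
        by (rule exI[of _ "mv n (fslice k X l) v"]) (rule span_ev[OF inV_mv])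
    qed (auto simp: orthon_ev)
    then show "\<exists>I f. orthon n I f \<and> finite I \<and> card I \<le> n \<and>
        (\<forall>v. inV n v \<longrightarrow> (\<exists>c. mv n (fslice k X l) v = (\<lambda>i. \<Sum>b\<in>I. c b * f b i)))" by blast
  qed
  then show ?thesis using build_tsvd[OF k X] by blast
qed

lemma tubal_rank_tsvd:
  assumes k: "k \<ge> 1" and X: "X \<in> tsym n k"
  shows "\<exists>U S V. is_tsvd n k X U S V \<and> nonzero_tubes n k S = tubal_rank n k X"
proof -
  obtain U S V where "is_tsvd n k X U S V" using tsvd_exists[OF k X] by blast
  then have "\<exists>s. \<exists>U S V. is_tsvd n k X U S V \<and> s = nonzero_tubes n k S" by blast
  from LeastI_ex[OF this] show ?thesis unfolding tubal_rank_def by metis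
qed

lemma sum_if_subset: assumes "T \<subseteq> A" "finite A"
  shows "(\<Sum>p\<in>A. if p \<in> T then f p else 0) = (\<Sum>p\<in>T. f p)"
proof -
  have "(\<Sum>p\<in>A. if p \<in> T then f p else 0) = (\<Sum>p\<in>A \<inter> T. f p)"
    using assms(2) by (simp add: sum.If_cases Int_def)
  also have "A \<inter> T = T" using assms(1) by blast
  finally show ?thesis .
qed

lemma tsvd_range:
  assumes k: "k \<ge> 1" and sv: "is_tsvd n k Z U S V" and l: "l < k"
  defines "T \<equiv> {t. t < n \<and> (\<exists>j<k. S t t j \<noteq> 0)}"
  defines "f \<equiv> (\<lambda>t i. if i < n then fslice k U l i t else 0)"
  shows "orthon n T f" "finite T"
    "\<forall>v. inV n v \<longrightarrow> (\<exists>c. mv n (fslice k Z l) v = (\<lambda>i. \<Sum>b\<in>T. c b * f b i))"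
proof -
  have tU: "torth n k U" and tV: "torth n k V" and fd: "fdiag n k S"
    and Zeq: "Z = tprod n k (tprod n k U S) (ttrans n k V)"
    using sv unfolding is_tsvd_def by auto
  show "finite T" unfolding T_def by simp
  show "orthon n T f" unfolding orthon_def
  proof (intro conjI ballI)
    fix a b assume ab: "a \<in> T" "b \<in> T"
    then have abn: "a < n" "b < n" unfolding T_def by auto
    have "ip n (f a) (f b) = (\<Sum>p<n. fslice k (ttrans n k U) l a p * fslice k U l p b)"
      unfolding ip_def f_def using fslice_ttrans[OF k abn(1)] by (intro sum.cong) auto
    also have "\<dots> = fslice k (tprod n k (ttrans n k U) U) l a b" by (rule fslice_tprod[OF k abn, symmetric])
    also have "\<dots> = fslice k (tid n k) l a b" using tU unfolding torth_def by simp
    also have "\<dots> = (if a = b then 1 else 0)" by (rule fslice_tid[OF k abn])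
    finally show "ip n (f a) (f b) = (if a = b then 1 else 0)" .
  next
    fix a show "inV n (f a)" unfolding inV_def f_def by auto
  qed
  have S0: "fslice k S l q p = 0" if "q < n" "p < n" "q \<noteq> p \<or> q \<notin> T" for q p
  proof -
    have "S q p j = 0" if j: "j < k" for j
    proof (cases "q = p")
      case True
      then have "q \<notin> T" using \<open>q \<noteq> p \<or> q \<notin> T\<close> by simp
      then show ?thesis using True j \<open>q < n\<close> unfolding T_def by auto
    next
      case False then show ?thesis using fd unfolding fdiag_def by auto
    qed
    then show ?thesis unfolding fslice_rou by (intro sum.neutral) auto
  qed
  have Zs: "fslice k Z l i i' = (\<Sum>p\<in>T. fslice k U l i p * fslice k S l p p * cnj (fslice k V l i' p))"
    if i: "i < n" "i' < n" for i i'
  proof -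
    have "fslice k Z l i i' = (\<Sum>p<n. fslice k (tprod n k U S) l i p * fslice k (ttrans n k V) l p i')"
      unfolding Zeq by (rule fslice_tprod[OF k i])
    also have "\<dots> = (\<Sum>p<n. (\<Sum>q<n. fslice k U l i q * fslice k S l q p) * cnj (fslice k V l i' p))"
      using fslice_tprod[OF k i(1)] fslice_ttrans[OF k _ i(2)] by (intro sum.cong) auto
    also have "\<dots> = (\<Sum>p<n. (if p \<in> T then fslice k U l i p * fslice k S l p p * cnj (fslice k V l i' p) else 0))"
    proof (intro sum.cong refl)
      fix p assume p: "p \<in> {..<n}"
      have "(\<Sum>q<n. fslice k U l i q * fslice k S l q p) = (\<Sum>q<n. if q = p then (if p \<in> T then fslice k U l i p * fslice k S l p p else 0) else 0)"
        using S0 p by (intro sum.cong) auto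
      also have "\<dots> = (if p \<in> T then fslice k U l i p * fslice k S l p p else 0)" using p by simp
      finally show "(\<Sum>q<n. fslice k U l i q * fslice k S l q p) * cnj (fslice k V l i' p) =
         (if p \<in> T then fslice k U l i p * fslice k S l p p * cnj (fslice k V l i' p) else 0)" by simp
    qed
    also have "\<dots> = (\<Sum>p\<in>T. fslice k U l i p * fslice k S l p p * cnj (fslice k V l i' p))"
      by (rule sum_if_subset) (auto simp: T_def)
    finally show ?thesis .
  qed
  show "\<forall>v. inV n v \<longrightarrow> (\<exists>c. mv n (fslice k Z l) v = (\<lambda>i. \<Sum>b\<in>T. c b * f b i))"
  proof (intro allI impI exI)
    fix v
    show "mv n (fslice k Z l) v = (\<lambda>i. \<Sum>b\<in>T. (fslice k S l b b * (\<Sum>i'<n. cnj (fslice k V l i' b) * v i')) * f b i)"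
    proof
      fix i show "mv n (fslice k Z l) v i = (\<Sum>b\<in>T. (fslice k S l b b * (\<Sum>i'<n. cnj (fslice k V l i' b) * v i')) * f b i)"
      proof (cases "i < n")
        case True
        have "mv n (fslice k Z l) v i = (\<Sum>i'<n. (\<Sum>p\<in>T. fslice k U l i p * fslice k S l p p * cnj (fslice k V l i' p)) * v i')"
          unfolding mv_def using True Zs by simp
        also have "\<dots> = (\<Sum>p\<in>T. \<Sum>i'<n. fslice k U l i p * fslice k S l p p * cnj (fslice k V l i' p) * v i')"
          by (simp add: sum_distrib_right, rule sum.swap)
        also have "\<dots> = (\<Sum>b\<in>T. (fslice k S l b b * (\<Sum>i'<n. cnj (fslice k V l i' b) * v i')) * f b i)"
          unfolding f_def using True by (simp add: sum_distrib_left mult_ac)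
        finally show ?thesis .
      qed (simp add: mv_def f_def)
    qed
  qed
qed

lemma gs_extend:
  assumes F: "orthon n I f" "finite I" and e: "e \<notin> I" and w: "inV n w"
  shows "\<exists>I' f'. orthon n I' f' \<and> finite I' \<and> card I' \<le> card I + 1 \<and> I \<subseteq> I' \<and> (\<forall>b\<in>I. f' b = f b)
     \<and> (\<exists>c. w = (\<lambda>i. \<Sum>b\<in>I'. c b * f' b i))"
proof -
  define P where "P = (\<lambda>i. \<Sum>b\<in>I. ip n (f b) w * f b i)"
  define r where "r = (\<lambda>i. w i - P i)"
  have inVr: "inV n r" unfolding r_def P_def using F(1) unfolding orthon_def
    by (intro inV_diff w inV_sum) auto
  have rf: "ip n (f b) r = 0" if "b \<in> I" for b
    using bessel_id(1)[OF F, of b w] that unfolding r_def P_def by simp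
  show ?thesis
  proof (cases "Re (ip n r r) = 0")
    case True
    then have "r = (\<lambda>i. 0)" by (rule ip_zeroD[OF inVr])
    then have "w = P" unfolding r_def by (metis (no_types, lifting) eq_iff_diff_eq_0 ext)
    then have "w = (\<lambda>i. \<Sum>b\<in>I. ip n (f b) w * f b i)" unfolding P_def .
    then have "\<exists>c. w = (\<lambda>i. \<Sum>b\<in>I. c b * f b i)" by (rule exI[of _ "\<lambda>b. ip n (f b) w"])
    then show ?thesis using F by (intro exI[of _ I] exI[of _ f]) auto
  next
    case False
    then have pos: "Re (ip n r r) > 0" using ip_self_nonneg[of n r] by simp
    define s where "s = sqrt (Re (ip n r r))"
    have sp: "s > 0" unfolding s_def using pos by simp
    define g where "g = (\<lambda>i. complex_of_real (1 / s) * r i)"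
    have gg: "ip n g g = 1" unfolding g_def s_def by (rule normalize_vec[OF pos])
    have fg: "ip n (f b) g = 0" if "b \<in> I" for b
      unfolding g_def ip_scale_right using rf[OF that] by simp
    have gf: "ip n g (f b) = 0" if "b \<in> I" for b
      using fg[OF that] by (metis ip_cnj complex_cnj_zero)
    define f' where "f' = f(e := g)"
    define I' where "I' = insert e I"
    have o: "orthon n I' f'" unfolding orthon_def
    proof (intro conjI ballI)
      fix a b assume ab: "a \<in> I'" "b \<in> I'"
      show "ip n (f' a) (f' b) = (if a = b then 1 else 0)"
        using ab F(1) e gg fg gf unfolding I'_def f'_def orthon_def by auto
    next
      fix a assume "a \<in> I'"
      have inVg: "inV n g" unfolding g_def by (rule inV_scale[OF inVr])
      then show "inV n (f' a)" using F(1) \<open>a \<in> I'\<close> unfolding I'_def f'_def orthon_def by auto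
    qed
    define c where "c b = (if b = e then complex_of_real s else ip n (f b) w)" for b
    have "w = (\<lambda>i. \<Sum>b\<in>I'. c b * f' b i)"
    proof
      fix i
      have "(\<Sum>b\<in>I'. c b * f' b i) = c e * g i + (\<Sum>b\<in>I. c b * f' b i)"
        unfolding I'_def using F(2) e by (simp add: f'_def)
      also have "(\<Sum>b\<in>I. c b * f' b i) = P i"
        unfolding P_def c_def f'_def using e by (intro sum.cong) auto
      also have "c e * g i = r i" unfolding c_def g_def using sp by simp
      finally show "w i = (\<Sum>b\<in>I'. c b * f' b i)" unfolding r_def by simp
    qed
    moreover have "card I' \<le> card I + 1" unfolding I'_def using F(2) e by simp
    moreover have "\<forall>b\<in>I. f' b = f b" unfolding f'_def using e by auto
    ultimately show ?thesis using o F(2) unfolding I'_def by blast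
  qed
qed

lemma span_extend:
  fixes f f' :: "nat \<Rightarrow> nat \<Rightarrow> complex"
  assumes "I \<subseteq> I'" "finite I'" "\<forall>b\<in>I. f' b = f b"
  shows "(\<lambda>i. \<Sum>b\<in>I. c b * f b i) = (\<lambda>i. \<Sum>b\<in>I'. (if b \<in> I then c b else 0) * f' b i)"
proof
  fix i
  have "(\<Sum>b\<in>I'. (if b \<in> I then c b else 0) * f' b i) = (\<Sum>b\<in>I'. if b \<in> I then c b * f b i else 0)"
    using assms(3) by (intro sum.cong) auto
  also have "\<dots> = (\<Sum>b\<in>I. c b * f b i)" by (rule sum_if_subset[OF assms(1,2)])
  finally show "(\<Sum>b\<in>I. c b * f b i) = (\<Sum>b\<in>I'. (if b \<in> I then c b else 0) * f' b i)" by simp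
qed

lemma span_lin:
  fixes f :: "nat \<Rightarrow> nat \<Rightarrow> complex"
  shows "(\<lambda>i. \<alpha> * (\<Sum>b\<in>I. c b * f b i) + \<beta> * (\<Sum>b\<in>I. d b * f b i)) = (\<lambda>i. \<Sum>b\<in>I. (\<alpha> * c b + \<beta> * d b) * f b i)"
  by (rule ext) (simp only: sum_distrib_left sum.distrib[symmetric] distrib_right mult.assoc)

lemma mv_matlin: "mv n (\<lambda>i j. \<alpha> * A i j + \<beta> * B i j) v = (\<lambda>i. \<alpha> * mv n A v i + \<beta> * mv n B v i)"
  unfolding mv_def by (rule ext) (simp add: distrib_right sum.distrib sum_distrib_left mult.assoc)

definition ytest :: "nat \<Rightarrow> nat \<Rightarrow> nat \<Rightarrow> (nat \<Rightarrow> complex) \<Rightarrow> tensor" where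
  "ytest n k l0 u = (\<lambda>i i' j. if i < n \<and> i' < n \<and> j < k then Re (u i * cnj (u i') * rou k (int l0 * int j)) else 0)"

lemma ytest_sym: assumes k: "k \<ge> 1" shows "ytest n k l0 u \<in> tsym n k"
  unfolding tsym_def
proof (intro CollectI conjI)
  show "valid_tensor n k (ytest n k l0 u)" unfolding valid_tensor_def ytest_def by auto
  show "ttrans n k (ytest n k l0 u) = ytest n k l0 u"
  proof (intro ext)
    fix i i' j
    show "ttrans n k (ytest n k l0 u) i i' j = ytest n k l0 u i i' j"
    proof (cases "i < n \<and> i' < n \<and> j < k")
      case True
      have eqr: "rou k (int l0 * int ((k - j) mod k)) = rou k (- (int l0 * int j))" by (rule rou_negmod[OF k]) (use True in simp)
      have A: "u i' * cnj (u i) * rou k (int l0 * int ((k - j) mod k)) = cnj (u i * cnj (u i') * rou k (int l0 * int j))"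
        unfolding eqr by (simp add: rou_cnj mult_ac)
      have "Re (u i' * cnj (u i) * rou k (int l0 * int ((k - j) mod k))) = Re (u i * cnj (u i') * rou k (int l0 * int j))"
        by (simp only: A cnj.sel(1))
      moreover have "(k - j) mod k < k" using k by simp
      ultimately show ?thesis using True unfolding ttrans_def ytest_def by simp
    next
      case False then show ?thesis unfolding ttrans_def ytest_def by auto
    qed
  qed
qed

lemma dvd_neg_iff: assumes "l < k" "l0 < k"
  shows "int k dvd (- int l0 - int l) \<longleftrightarrow> l = (k - l0) mod k"
proof -
  have "int k dvd (- int l0 - int l) \<longleftrightarrow> int k dvd (int l0 + int l)"
  proof -
    have "- int l0 - int l = - (int l0 + int l)" by simp
    then show ?thesis by (simp only: dvd_minus_iff)
  qed
  also have "\<dots> \<longleftrightarrow> l = (k - l0) mod k"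
  proof
    assume "int k dvd (int l0 + int l)"
    then obtain c where c: "int l0 + int l = int k * c" by blast
    have "c \<ge> 0"
    proof (rule ccontr)
      assume "\<not> c \<ge> 0"
      then have "c \<le> -1" by simp
      then have "int k * c \<le> int k * (-1)" by (intro mult_left_mono) auto
      moreover have "int k > 0" using assms by simp
      ultimately show False using c by linarith
    qed
    moreover have "c \<le> 1"
    proof (rule ccontr)
      assume "\<not> c \<le> 1"
      then have "c \<ge> 2" by simp
      then have "int k * 2 \<le> int k * c" by (intro mult_left_mono) auto
      moreover have "int l0 + int l < int k * 2" using assms by simp
      ultimately show False using c by linarith
    qed
    ultimately have "c = 0 \<or> c = 1" by auto
    then show "l = (k - l0) mod k"
    proof
      assume "c = 0" then have "l0 = 0" "l = 0" using c by auto
      then show ?thesis by simp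
    next
      assume "c = 1" then have "l0 + l = k" using c by simp
      then show ?thesis using assms by auto
    qed
  next
    assume l: "l = (k - l0) mod k"
    show "int k dvd (int l0 + int l)"
    proof (cases "l0 = 0")
      case True then show ?thesis using l by simp
    next
      case False
      then have "l = k - l0" using l assms by simp
      then have "int l0 + int l = int k" using assms by simp
      then show ?thesis by simp
    qed
  qed
  finally show ?thesis .
qed

lemma re_half: "complex_of_real (Re z) = (z + cnj z) / 2"
  by (simp add: complex_eq_iff)

lemma ytest_slice: assumes k: "k \<ge> 1" and i: "i < n" "i' < n" and l: "l < k" and l0: "l0 < k"
  shows "fslice k (ytest n k l0 u) l i i' = of_nat k / 2 * ((if l = l0 then u i * cnj (u i') else 0)
     + (if l = (k - l0) mod k then cnj (u i) * u i' else 0))"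
proof -
  define g where "g = u i * cnj (u i')"
  have cg: "cnj g = cnj (u i) * u i'" unfolding g_def by simp
  have "fslice k (ytest n k l0 u) l i i' = (\<Sum>j<k. (g * rou k (int l0 * int j) + cnj g * rou k (- (int l0 * int j))) / 2 * rou k (- (int l * int j)))"
    unfolding fslice_rou
  proof (intro sum.cong refl)
    fix j assume j: "j \<in> {..<k}"
    have "complex_of_real (ytest n k l0 u i i' j) = complex_of_real (Re (g * rou k (int l0 * int j)))"
      unfolding ytest_def g_def using i j by simp
    also have "\<dots> = (g * rou k (int l0 * int j) + cnj (g * rou k (int l0 * int j))) / 2" by (rule re_half)
    also have "cnj (g * rou k (int l0 * int j)) = cnj g * rou k (- (int l0 * int j))" by (simp add: rou_cnj)
    finally show "complex_of_real (ytest n k l0 u i i' j) * rou k (- (int l * int j)) =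
      (g * rou k (int l0 * int j) + cnj g * rou k (- (int l0 * int j))) / 2 * rou k (- (int l * int j))" by simp
  qed
  also have "\<dots> = (g * (\<Sum>j<k. rou k ((int l0 - int l) * int j)) + cnj g * (\<Sum>j<k. rou k ((- int l0 - int l) * int j))) / 2"
  proof -
    have "(g * rou k (int l0 * int j) + cnj g * rou k (- (int l0 * int j))) / 2 * rou k (- (int l * int j))
        = (g * rou k ((int l0 - int l) * int j) + cnj g * rou k ((- int l0 - int l) * int j)) / 2" for j
    proof -
      have "rou k (int l0 * int j) * rou k (- (int l * int j)) = rou k (- (int l * int j)) * rou k (int l0 * int j)"
        by (rule mult.commute)
      also have "\<dots> = rou k ((int l0 - int l) * int j)" by (rule rou_prod)
      finally have "rou k (int l0 * int j) * rou k (- (int l * int j)) = rou k ((int l0 - int l) * int j)" .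
      moreover have "rou k (- (int l0 * int j)) * rou k (- (int l * int j)) = rou k ((- int l0 - int l) * int j)"
      proof -
        have e: "- (int l0 * int j) + - (int l * int j) = (- int l0 - int l) * int j" by (simp add: algebra_simps)
        have "rou k (- (int l0 * int j)) * rou k (- (int l * int j)) = rou k (- (int l0 * int j) + - (int l * int j))"
          by (rule rou_add[symmetric])
        then show ?thesis unfolding e .
      qed
      ultimately show ?thesis by (simp add: algebra_simps)
    qed
    then show ?thesis by (simp add: sum_divide_distrib[symmetric] sum.distrib sum_distrib_left)
  qed
  also have "\<dots> = of_nat k / 2 * ((if l = l0 then g else 0) + (if l = (k - l0) mod k then cnj g else 0))"
  proof -
    have "(\<Sum>j<k. rou k ((int l0 - int l) * int j)) = (if l0 = l then of_nat k else 0)" by (rule orth_sum[OF k l0 l])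
    moreover have "(\<Sum>j<k. rou k ((- int l0 - int l) * int j)) = (if l = (k - l0) mod k then of_nat k else 0)"
      using rou_sum[OF k, of "- int l0 - int l"] dvd_neg_iff[OF l l0] by simp
    ultimately show ?thesis by (auto simp: algebra_simps)
  qed
  finally show ?thesis unfolding cg g_def by simp
qed

lemma ip_mv: "ip n u (mv n H v) = (\<Sum>i<n. cnj (u i) * (\<Sum>j<n. H i j * v j))"
  unfolding ip_def mv_def by (intro sum.cong) auto

lemma ytest_inner: assumes k: "k \<ge> 1"
  shows "tinner n k W (ytest n k l0 u) = Re (ip n u (mv n (fslice k W l0) u))"
proof -
  have "tinner n k W (ytest n k l0 u) = (\<Sum>i<n. \<Sum>i'<n. \<Sum>j<k. W i i' j * Re (u i * cnj (u i') * rou k (int l0 * int j)))"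
    unfolding tinner_def ytest_def by (intro sum.cong) auto
  also have "\<dots> = Re (\<Sum>i<n. \<Sum>i'<n. \<Sum>j<k. complex_of_real (W i i' j) * (u i * cnj (u i') * rou k (int l0 * int j)))"
    by (simp add: Re_sum)
  also have "(\<Sum>i<n. \<Sum>i'<n. \<Sum>j<k. complex_of_real (W i i' j) * (u i * cnj (u i') * rou k (int l0 * int j)))
      = cnj (ip n u (mv n (fslice k W l0) u))"
  proof -
    have "cnj (ip n u (mv n (fslice k W l0) u)) = (\<Sum>i<n. u i * (\<Sum>i'<n. cnj (fslice k W l0 i i') * cnj (u i')))"
      unfolding ip_mv by (simp add: cnj_sum)
    also have "\<dots> = (\<Sum>i<n. \<Sum>i'<n. \<Sum>j<k. complex_of_real (W i i' j) * (u i * cnj (u i') * rou k (int l0 * int j)))"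
      unfolding fslice_rou by (simp add: cnj_sum rou_cnj sum_distrib_left sum_distrib_right mult_ac)
    finally show ?thesis by simp
  qed
  finally show ?thesis by simp
qed

lemma ytest_norm: assumes k: "k \<ge> 1"
  shows "tinner n k (ytest n k l0 u) (ytest n k l0 u) \<le> real k * (Re (ip n u u))\<^sup>2"
proof -
  have "tinner n k (ytest n k l0 u) (ytest n k l0 u) = (\<Sum>i<n. \<Sum>i'<n. \<Sum>j<k. (Re (u i * cnj (u i') * rou k (int l0 * int j)))\<^sup>2)"
    unfolding tinner_def ytest_def by (intro sum.cong) (auto simp: power2_eq_square)
  also have "\<dots> \<le> (\<Sum>i<n. \<Sum>i'<n. \<Sum>j<k. (cmod (u i))\<^sup>2 * (cmod (u i'))\<^sup>2)"
  proof (intro sum_mono)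
    fix i i' j
    have "\<bar>Re (u i * cnj (u i') * rou k (int l0 * int j))\<bar> \<le> cmod (u i * cnj (u i') * rou k (int l0 * int j))"
      by (rule abs_Re_le_cmod)
    also have "\<dots> = cmod (u i) * cmod (u i')" by (simp add: norm_mult rou_norm)
    finally have "(Re (u i * cnj (u i') * rou k (int l0 * int j)))\<^sup>2 \<le> (cmod (u i) * cmod (u i'))\<^sup>2"
      by (metis abs_ge_zero power2_abs power_mono)
    then show "(Re (u i * cnj (u i') * rou k (int l0 * int j)))\<^sup>2 \<le> (cmod (u i))\<^sup>2 * (cmod (u i'))\<^sup>2"
      by (simp add: power_mult_distrib)
  qed
  also have "\<dots> = real k * (\<Sum>i<n. (cmod (u i))\<^sup>2) * (\<Sum>i'<n. (cmod (u i'))\<^sup>2)"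
    by (simp add: sum_distrib_left sum_distrib_right mult_ac)
  also have "\<dots> = real k * (Re (ip n u u))\<^sup>2" by (simp add: ip_self_Re power2_eq_square)
  finally show ?thesis .
qed

lemma ytest_range:
  assumes k: "k \<ge> 1" and l: "l < k" and l0: "l0 < k" and u: "inV n u"
    and ur: "(k - l0) mod k = l0 \<Longrightarrow> \<forall>i. Im (u i) = 0"
  shows "\<exists>\<sigma>. mv n (fslice k (ytest n k l0 u) l) v = (\<lambda>i. \<sigma> * (if l = l0 then u i else cnj (u i)))"
proof -
  define \<alpha> where "\<alpha> = (\<Sum>i'<n. cnj (u i') * v i')"
  define \<beta> where "\<beta> = (\<Sum>i'<n. u i' * v i')"
  define c where "c = (k - l0) mod k"
  have mvY: "mv n (fslice k (ytest n k l0 u) l) v = (\<lambda>i. of_nat k / 2 * ((if l = l0 then \<alpha> * u i else 0) + (if l = c then \<beta> * cnj (u i) else 0)))"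
  proof
    fix i show "mv n (fslice k (ytest n k l0 u) l) v i = of_nat k / 2 * ((if l = l0 then \<alpha> * u i else 0) + (if l = c then \<beta> * cnj (u i) else 0))"
    proof (cases "i < n")
      case True
      have "mv n (fslice k (ytest n k l0 u) l) v i = (\<Sum>i'<n. fslice k (ytest n k l0 u) l i i' * v i')"
        unfolding mv_def using True by simp
      also have "\<dots> = (\<Sum>i'<n. of_nat k / 2 * ((if l = l0 then u i * cnj (u i') else 0)
         + (if l = c then cnj (u i) * u i' else 0)) * v i')"
        unfolding c_def using ytest_slice[OF k True _ l l0] by (intro sum.cong) auto
      also have "\<dots> = of_nat k / 2 * ((if l = l0 then \<alpha> * u i else 0) + (if l = c then \<beta> * cnj (u i) else 0))"
        unfolding \<alpha>_def \<beta>_def by (simp add: sum_distrib_left sum_distrib_right sum.distrib sum_divide_distrib algebra_simps)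
      finally show ?thesis .
    next
      case False then show ?thesis using u unfolding mv_def inV_def by simp
    qed
  qed
  consider "l = l0" "l = c" | "l = l0" "l \<noteq> c" | "l \<noteq> l0" "l = c" | "l \<noteq> l0" "l \<noteq> c" by blast
  then show ?thesis
  proof cases
    case 1
    then have "\<forall>i. Im (u i) = 0" using ur unfolding c_def by simp
    then have "cnj (u i) = u i" for i by (simp add: cnj_real)
    then show ?thesis unfolding mvY using 1 by (intro exI[of _ "of_nat k / 2 * (\<alpha> + \<beta>)"]) (simp add: algebra_simps add_divide_distrib)
  next
    case 2 then show ?thesis unfolding mvY by (intro exI[of _ "of_nat k / 2 * \<alpha>"]) (simp add: algebra_simps)
  next
    case 3 then show ?thesis unfolding mvY by (intro exI[of _ "of_nat k / 2 * \<beta>"]) (simp add: algebra_simps)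
  next
    case 4 then show ?thesis unfolding mvY by (intro exI[of _ 0]) simp
  qed
qed

lemma gen_comb:
  assumes k: "k \<ge> 1" and sv: "is_tsvd n k Z U S V" and l0: "l0 < k" and u: "inV n u"
    and ur: "(k - l0) mod k = l0 \<Longrightarrow> \<forall>i. Im (u i) = 0" and l: "l < k"
  shows "\<exists>I f. orthon n I f \<and> finite I \<and> card I \<le> card {t. t < n \<and> (\<exists>j<k. S t t j \<noteq> 0)} + 1 \<and>
     (\<forall>v. inV n v \<longrightarrow> (\<exists>c. mv n (fslice k (\<lambda>i i' j. a * Z i i' j + b * ytest n k l0 u i i' j) l) v = (\<lambda>i. \<Sum>x\<in>I. c x * f x i)))"
proof -
  define T where "T = {t. t < n \<and> (\<exists>j<k. S t t j \<noteq> 0)}"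
  define f where "f = (\<lambda>t i. if i < n then fslice k U l i t else 0)"
  have R: "orthon n T f" "finite T" "\<forall>v. inV n v \<longrightarrow> (\<exists>c. mv n (fslice k Z l) v = (\<lambda>i. \<Sum>b\<in>T. c b * f b i))"
    using tsvd_range[OF k sv l] unfolding T_def f_def by auto
  define w where "w = (\<lambda>i. if l = l0 then u i else cnj (u i))"
  have inVw: "inV n w" using u unfolding w_def inV_def by auto
  have nT: "n \<notin> T" unfolding T_def by simp
  obtain I' f' cw where G: "orthon n I' f'" "finite I'" "card I' \<le> card T + 1" "T \<subseteq> I'" "\<forall>b\<in>T. f' b = f b"
    "w = (\<lambda>i. \<Sum>b\<in>I'. cw b * f' b i)"
    using gs_extend[OF R(1,2) nT inVw] by blast
  have "\<forall>v. inV n v \<longrightarrow> (\<exists>c. mv n (fslice k (\<lambda>i i' j. a * Z i i' j + b * ytest n k l0 u i i' j) l) v = (\<lambda>i. \<Sum>x\<in>I'. c x * f' x i))"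
  proof (intro allI impI)
    fix v assume v: "inV n v"
    obtain cz where cz: "mv n (fslice k Z l) v = (\<lambda>i. \<Sum>b\<in>T. cz b * f b i)" using R(3) v by blast
    obtain \<sigma> where sg: "mv n (fslice k (ytest n k l0 u) l) v = (\<lambda>i. \<sigma> * w i)"
      using ytest_range[OF k l l0 u ur, of v] unfolding w_def by blast
    have fs: "fslice k (\<lambda>i i' j. a * Z i i' j + b * ytest n k l0 u i i' j) l
       = (\<lambda>i i'. complex_of_real a * fslice k Z l i i' + complex_of_real b * fslice k (ytest n k l0 u) l i i')"
      by (intro ext) (rule fslice_lin)
    have "mv n (fslice k (\<lambda>i i' j. a * Z i i' j + b * ytest n k l0 u i i' j) l) v
      = (\<lambda>i. complex_of_real a * mv n (fslice k Z l) v i + complex_of_real b * mv n (fslice k (ytest n k l0 u) l) v i)"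
      unfolding fs by (rule mv_matlin)
    also have "\<dots> = (\<lambda>i. complex_of_real a * (\<Sum>x\<in>I'. (if x \<in> T then cz x else 0) * f' x i)
        + complex_of_real b * (\<Sum>x\<in>I'. (\<sigma> * cw x) * f' x i))"
    proof -
      have "(\<lambda>i. \<Sum>b\<in>T. cz b * f b i) = (\<lambda>i. \<Sum>x\<in>I'. (if x \<in> T then cz x else 0) * f' x i)"
        by (rule span_extend[OF G(4,2,5)])
      moreover have "(\<lambda>i. \<sigma> * w i) = (\<lambda>i. \<Sum>x\<in>I'. (\<sigma> * cw x) * f' x i)"
        by (subst G(6)) (simp add: sum_distrib_left mult.assoc)
      ultimately show ?thesis using cz sg by metis
    qed
    also have "\<dots> = (\<lambda>i. \<Sum>x\<in>I'. (complex_of_real a * (if x \<in> T then cz x else 0) + complex_of_real b * (\<sigma> * cw x)) * f' x i)"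
      by (rule span_lin)
    finally have eqX: "mv n (fslice k (\<lambda>i i' j. a * Z i i' j + b * ytest n k l0 u i i' j) l) v = (\<lambda>i. \<Sum>x\<in>I'. (complex_of_real a * (if x \<in> T then cz x else 0) + complex_of_real b * (\<sigma> * cw x)) * f' x i)" .
    show "\<exists>c. mv n (fslice k (\<lambda>i i' j. a * Z i i' j + b * ytest n k l0 u i i' j) l) v = (\<lambda>i. \<Sum>x\<in>I'. c x * f' x i)"
      by (rule exI[of _ "\<lambda>x. complex_of_real a * (if x \<in> T then cz x else 0) + complex_of_real b * (\<sigma> * cw x)"]) (simp only: eqX)
  qed
  then show ?thesis using G unfolding T_def by blast
qed

lemma blk_sum: fixes a n :: nat shows "sum f {a..<a+n} = (\<Sum>i<n. f (a+i))"
proof -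
  have "sum f {0 + a..<n + a} = (\<Sum>i=0..<n. f (i + a))" by (rule sum.shift_bounds_nat_ivl)
  then show ?thesis by (simp add: atLeast0LessThan add.commute)
qed

lemma sum_blocks: fixes n k :: nat shows "(\<Sum>p<n*k. f p) = (\<Sum>l<k. \<Sum>i<n. f (l*n + i))"
proof -
  have "(\<Sum>p<k*n. f p) = (\<Sum>l<k. sum f {l*n..<l*n + n})" by (rule sum.nat_group[symmetric])
  also have "\<dots> = (\<Sum>l<k. \<Sum>i<n. f (l*n + i))" by (simp only: blk_sum)
  finally show ?thesis by (simp add: mult.commute)
qed

lemma idx_divmod: fixes l n i :: nat assumes "i < n" shows "(l*n + i) div n = l" "(l*n + i) mod n = i"
proof -
  have n: "n \<noteq> 0" using assms by simp
  have "(l*n + i) div n = (i + l*n) div n" by (simp add: add.commute)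
  also have "\<dots> = l + i div n" by (rule div_mult_self1[OF n])
  finally show "(l*n + i) div n = l" using assms by simp
  have "(l*n + i) mod n = (i + l*n) mod n" by (simp add: add.commute)
  also have "\<dots> = i mod n" by (rule mod_mult_self1)
  finally show "(l*n + i) mod n = i" using assms by simp
qed

lemma idx_lt: fixes l k i n :: nat shows "l < k \<Longrightarrow> i < n \<Longrightarrow> l*n + i < n*k"
proof -
  assume a: "l < k" "i < n"
  have "l*n + i < l*n + n" using a by simp
  also have "\<dots> = (l+1)*n" by simp
  also have "\<dots> \<le> k*n" using a by (intro mult_right_mono) auto
  finally show ?thesis by (simp add: mult.commute)
qed

definition blk :: "nat \<Rightarrow> (nat \<Rightarrow> complex) \<Rightarrow> nat \<Rightarrow> nat \<Rightarrow> complex" where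
  "blk n x l = (\<lambda>i. if i < n then x (l*n + i) else 0)"

lemma inV_blk: "inV n (blk n x l)" unfolding inV_def blk_def by auto

lemma cmatvec_blk:
  assumes l: "l < k" and i: "i < n"
  shows "cmatvec (n*k) (blockdiag n k W) x (l*n + i) = mv n (fslice k W l) (blk n x l) i"
proof -
  have n: "n > 0" using i by simp
  have "cmatvec (n*k) (blockdiag n k W) x (l*n + i) = (\<Sum>l'<k. \<Sum>i'<n. blockdiag n k W (l*n + i) (l'*n + i') * x (l'*n + i'))"
    unfolding cmatvec_def by (rule sum_blocks)
  also have "\<dots> = (\<Sum>l'<k. if l' = l then (\<Sum>i'<n. fslice k W l i i' * x (l*n + i')) else 0)"
  proof (intro sum.cong refl)
    fix l' assume l': "l' \<in> {..<k}"
    show "(\<Sum>i'<n. blockdiag n k W (l*n + i) (l'*n + i') * x (l'*n + i')) = (if l' = l then (\<Sum>i'<n. fslice k W l i i' * x (l*n + i')) else 0)"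
    proof (cases "l' = l")
      case True
      have "(\<Sum>i'<n. blockdiag n k W (l*n + i) (l'*n + i') * x (l'*n + i')) = (\<Sum>i'<n. fslice k W l i i' * x (l*n + i'))"
        using True idx_lt[OF l i] idx_lt[OF l] i n unfolding blockdiag_def by (intro sum.cong) (auto simp: idx_divmod)
      then show ?thesis using True by simp
    next
      case False
      have "(\<Sum>i'<n. blockdiag n k W (l*n + i) (l'*n + i') * x (l'*n + i')) = 0"
        using False i n unfolding blockdiag_def by (intro sum.neutral) (auto simp: idx_divmod)
      then show ?thesis using False by simp
    qed
  qed
  also have "\<dots> = (\<Sum>i'<n. fslice k W l i i' * x (l*n + i'))" using l by simp
  also have "\<dots> = mv n (fslice k W l) (blk n x l) i" unfolding mv_def blk_def using i by simp
  finally show ?thesis .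
qed

lemma cvnorm_sq: "(cvnorm N x)\<^sup>2 = (\<Sum>p<N. (cmod (x p))\<^sup>2)"
  unfolding cvnorm_def by (simp add: sum_nonneg)

lemma cvnorm_blocks: "(cvnorm (n*k) x)\<^sup>2 = (\<Sum>l<k. Re (ip n (blk n x l) (blk n x l)))"
  unfolding cvnorm_sq sum_blocks ip_self_Re blk_def by simp

lemma cvnorm_matvec_blocks: "(cvnorm (n*k) (cmatvec (n*k) (blockdiag n k W) x))\<^sup>2
   = (\<Sum>l<k. Re (ip n (mv n (fslice k W l) (blk n x l)) (mv n (fslice k W l) (blk n x l))))"
  unfolding cvnorm_sq sum_blocks ip_self_Re using cmatvec_blk by (intro sum.cong) auto

lemma spec_upper:
  assumes B: "B \<ge> 0"
    and H: "\<forall>l<k. \<forall>y. inV n y \<longrightarrow> Re (ip n (mv n (fslice k W l) y) (mv n (fslice k W l) y)) \<le> B\<^sup>2 * Re (ip n y y)"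
  shows "spec_norm n k W \<le> B"
  unfolding spec_norm_def cmat_opnorm_def
proof (rule cSup_least)
  show "{cvnorm (n*k) (cmatvec (n*k) (blockdiag n k W) x) |x. cvnorm (n*k) x \<le> 1} \<noteq> {}"
  proof -
    have "cvnorm (n*k) (\<lambda>p. 0) \<le> 1" by (simp add: cvnorm_def)
    then show ?thesis by blast
  qed
next
  fix z assume "z \<in> {cvnorm (n*k) (cmatvec (n*k) (blockdiag n k W) x) |x. cvnorm (n*k) x \<le> 1}"
  then obtain x where z: "z = cvnorm (n*k) (cmatvec (n*k) (blockdiag n k W) x)" and x: "cvnorm (n*k) x \<le> 1" by blast
  have "z\<^sup>2 = (\<Sum>l<k. Re (ip n (mv n (fslice k W l) (blk n x l)) (mv n (fslice k W l) (blk n x l))))"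
    unfolding z by (rule cvnorm_matvec_blocks)
  also have "\<dots> \<le> (\<Sum>l<k. B\<^sup>2 * Re (ip n (blk n x l) (blk n x l)))"
    using H inV_blk by (intro sum_mono) auto
  also have "\<dots> = B\<^sup>2 * (cvnorm (n*k) x)\<^sup>2" by (simp add: cvnorm_blocks sum_distrib_left)
  also have "\<dots> \<le> B\<^sup>2 * 1"
  proof -
    have "cvnorm (n*k) x \<ge> 0" unfolding cvnorm_def by (simp add: sum_nonneg)
    then have "(cvnorm (n*k) x)\<^sup>2 \<le> 1" using x by (simp add: power_le_one)
    then show ?thesis by (intro mult_left_mono) auto
  qed
  finally have "z\<^sup>2 \<le> B\<^sup>2" by simp
  moreover have "z \<ge> 0" unfolding z cvnorm_def by (simp add: sum_nonneg)
  ultimately show "z \<le> B" using B by (simp add: power2_le_iff_abs_le)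
qed

lemma cvnorm_nonneg: "cvnorm N x \<ge> 0" unfolding cvnorm_def by (simp add: sum_nonneg)

lemma opnorm_bdd: "bdd_above {cvnorm N (cmatvec N M x) |x. cvnorm N x \<le> 1}"
proof (rule bdd_aboveI)
  fix z assume "z \<in> {cvnorm N (cmatvec N M x) |x. cvnorm N x \<le> 1}"
  then obtain x where z: "z = cvnorm N (cmatvec N M x)" and x: "cvnorm N x \<le> 1" by blast
  have xq: "cmod (x q) \<le> 1" if "q < N" for q
  proof -
    have "(cmod (x q))\<^sup>2 \<le> (\<Sum>p<N. (cmod (x p))\<^sup>2)" using that by (intro member_le_sum) auto
    also have "\<dots> = (cvnorm N x)\<^sup>2" by (rule cvnorm_sq[symmetric])
    also have "\<dots> \<le> 1" using x cvnorm_nonneg[of N x] by (simp add: power_le_one)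
    finally show ?thesis by (simp add: power_le_one_iff)
  qed
  have rowb: "cmod (cmatvec N M x p) \<le> (\<Sum>q<N. cmod (M p q))" for p
  proof -
    have "cmod (cmatvec N M x p) \<le> (\<Sum>q<N. cmod (M p q * x q))" unfolding cmatvec_def by (rule norm_sum)
    also have "\<dots> \<le> (\<Sum>q<N. cmod (M p q))"
    proof (rule sum_mono)
      fix q assume "q \<in> {..<N}"
      then have "cmod (x q) \<le> 1" using xq by simp
      then show "cmod (M p q * x q) \<le> cmod (M p q)" by (simp add: norm_mult mult_left_le)
    qed
    finally show ?thesis .
  qed
  have "z = sqrt (\<Sum>p<N. (cmod (cmatvec N M x p))\<^sup>2)" unfolding z cvnorm_def ..
  also have "\<dots> \<le> sqrt (\<Sum>p<N. (\<Sum>q<N. cmod (M p q))\<^sup>2)"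
    using rowb by (intro real_sqrt_le_mono sum_mono power_mono) auto
  finally show "z \<le> sqrt (\<Sum>p<N. (\<Sum>q<N. cmod (M p q))\<^sup>2)" .
qed

lemma spec_lower:
  assumes l: "l < k" and y: "inV n y" and y1: "Re (ip n y y) \<le> 1"
  shows "sqrt (Re (ip n (mv n (fslice k W l) y) (mv n (fslice k W l) y))) \<le> spec_norm n k W"
proof -
  define x where "x = (\<lambda>p. if p < n*k \<and> p div n = l then y (p mod n) else 0)"
  have bx: "blk n x l' = (if l' = l then y else (\<lambda>i. 0))" if l': "l' < k" for l'
  proof
    fix i show "blk n x l' i = (if l' = l then y else (\<lambda>i. 0)) i"
    proof (cases "i < n")
      case True
      then show ?thesis unfolding blk_def x_def using idx_lt[OF l' True] idx_divmod[OF True] by auto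
    next
      case False then show ?thesis using y unfolding blk_def inV_def by auto
    qed
  qed
  have "(cvnorm (n*k) x)\<^sup>2 = (\<Sum>l'<k. Re (ip n (blk n x l') (blk n x l')))" by (rule cvnorm_blocks)
  also have "\<dots> = (\<Sum>l'<k. if l' = l then Re (ip n y y) else 0)"
    using bx by (intro sum.cong) (auto simp: ip_def)
  also have "\<dots> = Re (ip n y y)" using l by simp
  finally have "(cvnorm (n*k) x)\<^sup>2 \<le> 1" using y1 by simp
  then have xin: "cvnorm (n*k) x \<le> 1" using cvnorm_nonneg[of "n*k" x] by (simp add: power_le_one_iff)
  have "(cvnorm (n*k) (cmatvec (n*k) (blockdiag n k W) x))\<^sup>2
     = (\<Sum>l'<k. Re (ip n (mv n (fslice k W l') (blk n x l')) (mv n (fslice k W l') (blk n x l'))))"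
    by (rule cvnorm_matvec_blocks)
  also have "\<dots> = (\<Sum>l'<k. if l' = l then Re (ip n (mv n (fslice k W l) y) (mv n (fslice k W l) y)) else 0)"
    using bx by (intro sum.cong) (auto simp: ip_def mv_def)
  also have "\<dots> = Re (ip n (mv n (fslice k W l) y) (mv n (fslice k W l) y))" using l by simp
  finally have "sqrt (Re (ip n (mv n (fslice k W l) y) (mv n (fslice k W l) y))) = cvnorm (n*k) (cmatvec (n*k) (blockdiag n k W) x)"
    using cvnorm_nonneg by (metis real_sqrt_abs abs_of_nonneg)
  also have "\<dots> \<le> spec_norm n k W"
    unfolding spec_norm_def cmat_opnorm_def
  proof (rule cSup_upper)
    show "cvnorm (n*k) (cmatvec (n*k) (blockdiag n k W) x) \<in> {cvnorm (n*k) (cmatvec (n*k) (blockdiag n k W) x) |x. cvnorm (n*k) x \<le> 1}"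
      using xin by blast
  qed (rule opnorm_bdd)
  finally show ?thesis .
qed

lemma norm_expand_gen:
  "Re (ip n (\<lambda>i. v i + complex_of_real t * w i) (\<lambda>i. v i + complex_of_real t * w i))
    = Re (ip n v v) + 2 * t * Re (ip n w v) + t * t * Re (ip n w w)"
proof -
  have "Re (ip n v w) = Re (ip n w v)" by (metis ip_cnj cnj.sel(1))
  then show ?thesis by (simp only: ip_expand) (simp add: algebra_simps)
qed

lemma quad_to_norm:
  assumes H: "herm n H" and B0: "B0 \<ge> 0"
    and Q: "\<forall>y. inV n y \<longrightarrow> \<bar>Re (ip n y (mv n H y))\<bar> \<le> B0 * Re (ip n y y)"
    and u: "inV n u"
  shows "Re (ip n (mv n H u) (mv n H u)) \<le> B0\<^sup>2 * Re (ip n u u)"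
proof -
  define v where "v = mv n H u"
  define \<alpha> where "\<alpha> = sqrt (Re (ip n u u))"
  define \<beta> where "\<beta> = sqrt (Re (ip n v v))"
  have a2: "\<alpha>\<^sup>2 = Re (ip n u u)" unfolding \<alpha>_def using ip_self_nonneg by simp
  have b2: "\<beta>\<^sup>2 = Re (ip n v v)" unfolding \<beta>_def using ip_self_nonneg by simp
  have a0: "\<alpha> \<ge> 0" "\<beta> \<ge> 0" unfolding \<alpha>_def \<beta>_def using ip_self_nonneg by auto
  show ?thesis
  proof (cases "\<beta> = 0")
    case True
    then show ?thesis using b2 ip_self_nonneg[of n u] B0 unfolding v_def by simp
  next
    case False
    then have bp: "\<beta> > 0" using a0 by simp
    have ap: "\<alpha> > 0"
    proof (rule ccontr)
      assume "\<not> \<alpha> > 0"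
      then have "Re (ip n u u) = 0" using a0 a2 by simp
      then have "u = (\<lambda>i. 0)" by (rule ip_zeroD[OF u])
      then have "\<And>i. mv n H u i = 0" unfolding mv_def by simp
      then have "v = (\<lambda>i. 0)" unfolding v_def by (rule ext)
      then have "\<beta> = 0" unfolding \<beta>_def ip_def by simp
      then show False using False by simp
    qed
    define t where "t = \<alpha> / \<beta>"
    define x where "x = (\<lambda>i. complex_of_real t * v i)"
    have inVx: "inV n x" unfolding x_def v_def by (intro inV_scale inV_mv)
    have xx: "Re (ip n x x) = \<alpha>\<^sup>2"
    proof -
      have "ip n x x = complex_of_real t * complex_of_real t * ip n v v" unfolding x_def
        by (simp only: ip_scale_left ip_scale_right complex_cnj_complex_of_real mult.assoc)
      then have "Re (ip n x x) = t * t * \<beta>\<^sup>2" using b2 by simp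
      also have "\<dots> = \<alpha>\<^sup>2" unfolding t_def using bp by (simp add: power2_eq_square)
      finally show ?thesis .
    qed
    have yHx: "Re (ip n u (mv n H x)) = \<alpha> * \<beta>"
    proof -
      have "ip n u (mv n H x) = complex_of_real t * ip n u (mv n H v)" unfolding x_def by (simp add: mv_scale ip_scale_right)
      also have "ip n u (mv n H v) = ip n v v" unfolding v_def by (rule herm_adj[OF H])
      finally have "Re (ip n u (mv n H x)) = t * \<beta>\<^sup>2" using b2 by simp
      also have "\<dots> = \<alpha> * \<beta>" unfolding t_def using bp by (simp add: power2_eq_square)
      finally show ?thesis .
    qed
    define zp where "zp = (\<lambda>i. x i + complex_of_real 1 * u i)"
    define zm where "zm = (\<lambda>i. x i + complex_of_real (-1) * u i)"
    have inVzp: "inV n zp" unfolding zp_def by (rule inV_add[OF inVx inV_scale[OF u]])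
    have inVzm: "inV n zm" unfolding zm_def by (rule inV_add[OF inVx inV_scale[OF u]])
    have "\<bar>Re (ip n zp (mv n H zp))\<bar> \<le> B0 * Re (ip n zp zp)" using Q inVzp by blast
    then have "Re (ip n zp (mv n H zp)) \<le> B0 * Re (ip n zp zp)" by (simp add: abs_le_iff)
    moreover have "\<bar>Re (ip n zm (mv n H zm))\<bar> \<le> B0 * Re (ip n zm zm)" using Q inVzm by blast
    then have "- Re (ip n zm (mv n H zm)) \<le> B0 * Re (ip n zm zm)" by (simp add: abs_le_iff)
    ultimately have "Re (ip n zp (mv n H zp)) - Re (ip n zm (mv n H zm)) \<le> B0 * (Re (ip n zp zp) + Re (ip n zm zm))"
      by (simp add: algebra_simps)
    moreover have "Re (ip n zp (mv n H zp)) - Re (ip n zm (mv n H zm)) = 4 * Re (ip n u (mv n H x))"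
      unfolding zp_def zm_def quad_expand[OF H] by simp
    moreover have "Re (ip n zp zp) + Re (ip n zm zm) = 2 * Re (ip n x x) + 2 * Re (ip n u u)"
      unfolding zp_def zm_def norm_expand_gen by simp
    ultimately have "4 * (\<alpha> * \<beta>) \<le> B0 * (4 * \<alpha>\<^sup>2)" using xx yHx a2 by simp
    then have "\<alpha> * \<beta> \<le> \<alpha> * (B0 * \<alpha>)" by (simp add: power2_eq_square algebra_simps)
    then have "\<beta> \<le> B0 * \<alpha>" using ap by simp
    then have "\<beta>\<^sup>2 \<le> (B0 * \<alpha>)\<^sup>2" using a0 by (intro power_mono) auto
    then show ?thesis using a2 b2 unfolding v_def by (simp add: power_mult_distrib)
  qed
qed

lemma ip_real: "(\<forall>i. Im (a i) = 0) \<Longrightarrow> (\<forall>i. Im (c i) = 0) \<Longrightarrow> Im (ip n a c) = 0"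
  unfolding ip_def by (simp add: Im_sum)

lemma ip_ri: "ip n (\<lambda>i. a i + \<i> * b i) (\<lambda>i. c i + \<i> * d i) = ip n a c + \<i> * (ip n a d - ip n b c) + ip n b d"
  unfolding ip_def by (simp add: algebra_simps sum.distrib sum_distrib_left sum_subtractf)

lemma real_quad_ext:
  assumes Hr: "\<forall>i<n. \<forall>j<n. Im (H i j) = 0"
    and QR: "\<forall>y. inV n y \<and> (\<forall>i. Im (y i) = 0) \<longrightarrow> \<bar>Re (ip n y (mv n H y))\<bar> \<le> B0 * Re (ip n y y)"
    and y: "inV n y"
  shows "\<bar>Re (ip n y (mv n H y))\<bar> \<le> B0 * Re (ip n y y)"
proof -
  define a where "a = (\<lambda>i. complex_of_real (Re (y i)))"
  define b where "b = (\<lambda>i. complex_of_real (Im (y i)))"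
  have ya: "y = (\<lambda>i. a i + \<i> * b i)" unfolding a_def b_def by (rule ext) (simp add: complex_eq_iff)
  have ar: "\<forall>i. Im (a i) = 0" "\<forall>i. Im (b i) = 0" unfolding a_def b_def by auto
  have ia: "inV n a" "inV n b" using y unfolding inV_def a_def b_def by auto
  have Hy: "mv n H y = (\<lambda>i. mv n H a i + \<i> * mv n H b i)"
    by (subst ya) (simp add: mv_add mv_scale)
  have mr: "\<forall>i. Im (mv n H a i) = 0" "\<forall>i. Im (mv n H b i) = 0"
    using mv_real[OF Hr] ar by auto
  have "Re (ip n y (mv n H y)) = Re (ip n a (mv n H a)) + Re (ip n b (mv n H b))"
  proof -
    have "ip n y (mv n H y) = ip n a (mv n H a) + \<i> * (ip n a (mv n H b) - ip n b (mv n H a)) + ip n b (mv n H b)"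
      unfolding Hy by (subst ya) (rule ip_ri)
    moreover have "Im (ip n a (mv n H b)) = 0" "Im (ip n b (mv n H a)) = 0"
      using ip_real ar mr by auto
    ultimately show ?thesis by simp
  qed
  moreover have "Re (ip n y y) = Re (ip n a a) + Re (ip n b b)"
  proof -
    have "ip n y y = ip n a a + \<i> * (ip n a b - ip n b a) + ip n b b"
      using ip_ri[of n a b a b] unfolding ya[symmetric] .
    moreover have "Im (ip n a b) = 0" "Im (ip n b a) = 0" using ip_real ar by auto
    ultimately show ?thesis by simp
  qed
  moreover have "\<bar>Re (ip n a (mv n H a))\<bar> \<le> B0 * Re (ip n a a)" using QR ia ar by blast
  moreover have "\<bar>Re (ip n b (mv n H b))\<bar> \<le> B0 * Re (ip n b b)" using QR ia ar by blast
  ultimately show ?thesis by (simp add: algebra_simps)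
qed

lemma rp3: "rou k (- (int l * int j)) * rou k (int l * int j') = rou k ((int j' - int j) * int l)"
proof -
  have e: "- (int l * int j) + int l * int j' = (int j' - int j) * int l" by (simp add: algebra_simps)
  have "rou k (- (int l * int j)) * rou k (int l * int j') = rou k (- (int l * int j) + int l * int j')"
    by (rule rou_add[symmetric])
  then show ?thesis unfolding e .
qed

lemma parseval_tube: assumes k: "k \<ge> 1"
  shows "(\<Sum>l<k. (cmod (\<Sum>j<k. complex_of_real (c j) * rou k (- (int l * int j))))\<^sup>2) = real k * (\<Sum>j<k. (c j)\<^sup>2)"
proof -
  define S where "S l = (\<Sum>j<k. complex_of_real (c j) * rou k (- (int l * int j)))" for l
  have cS: "cnj (S l) = (\<Sum>j'<k. complex_of_real (c j') * rou k (int l * int j'))" for l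
    unfolding S_def by (simp add: cnj_sum rou_cnj)
  have SS: "S l * cnj (S l) = (\<Sum>j<k. \<Sum>j'<k. complex_of_real (c j * c j') * rou k ((int j' - int j) * int l))" for l
  proof -
    have "S l * cnj (S l) = (\<Sum>j<k. \<Sum>j'<k. (complex_of_real (c j) * rou k (- (int l * int j))) * (complex_of_real (c j') * rou k (int l * int j')))"
      unfolding cS unfolding S_def by (rule sum_product)
    also have "\<dots> = (\<Sum>j<k. \<Sum>j'<k. complex_of_real (c j * c j') * rou k ((int j' - int j) * int l))"
    proof (intro sum.cong refl)
      fix j j'
      have "(complex_of_real (c j) * rou k (- (int l * int j))) * (complex_of_real (c j') * rou k (int l * int j'))
          = complex_of_real (c j * c j') * (rou k (- (int l * int j)) * rou k (int l * int j'))" by (simp add: mult_ac)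
      then show "(complex_of_real (c j) * rou k (- (int l * int j))) * (complex_of_real (c j') * rou k (int l * int j'))
          = complex_of_real (c j * c j') * rou k ((int j' - int j) * int l)" by (simp only: rp3)
    qed
    finally show ?thesis .
  qed
  have "(\<Sum>l<k. S l * cnj (S l)) = (\<Sum>j<k. \<Sum>j'<k. complex_of_real (c j * c j') * (\<Sum>l<k. rou k ((int j' - int j) * int l)))"
    unfolding SS by (subst sum.swap, rule sum.cong, simp, subst sum.swap, simp add: sum_distrib_left)
  also have "\<dots> = (\<Sum>j<k. complex_of_real (c j * c j) * of_nat k)"
  proof (intro sum.cong refl)
    fix j assume j: "j \<in> {..<k}"
    have "(\<Sum>j'<k. complex_of_real (c j * c j') * (\<Sum>l<k. rou k ((int j' - int j) * int l)))
        = (\<Sum>j'<k. if j' = j then complex_of_real (c j * c j) * of_nat k else 0)"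
      using orth_sum[OF k _ ] j by (intro sum.cong) auto
    also have "\<dots> = complex_of_real (c j * c j) * of_nat k" using j by simp
    finally show "(\<Sum>j'<k. complex_of_real (c j * c j') * (\<Sum>l<k. rou k ((int j' - int j) * int l))) = complex_of_real (c j * c j) * of_nat k" .
  qed
  finally have "Re (\<Sum>l<k. S l * cnj (S l)) = (\<Sum>j<k. c j * c j * real k)" by (simp add: Re_sum)
  moreover have "Re (\<Sum>l<k. S l * cnj (S l)) = (\<Sum>l<k. (cmod (S l))\<^sup>2)"
    by (simp add: Re_sum complex_mult_cnj power2_eq_square cmod_def)
  ultimately show ?thesis unfolding S_def by (simp add: sum_distrib_left power2_eq_square mult_ac)
qed

lemma parseval: assumes k: "k \<ge> 1"
  shows "tinner n k Z Z = (\<Sum>l<k. \<Sum>i<n. \<Sum>i'<n. (cmod (fslice k Z l i i'))\<^sup>2) / real k"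
proof -
  have "(\<Sum>l<k. \<Sum>i<n. \<Sum>i'<n. (cmod (fslice k Z l i i'))\<^sup>2) = (\<Sum>i<n. \<Sum>i'<n. \<Sum>l<k. (cmod (fslice k Z l i i'))\<^sup>2)"
    by (subst sum.swap, rule sum.cong, simp, rule sum.swap)
  also have "\<dots> = (\<Sum>i<n. \<Sum>i'<n. real k * (\<Sum>j<k. (Z i i' j)\<^sup>2))"
    unfolding fslice_rou using parseval_tube[OF k] by simp
  also have "\<dots> = real k * tinner n k Z Z" unfolding tinner_def by (simp add: sum_distrib_left power2_eq_square)
  finally show ?thesis using k by simp
qed

lemma ip_expansion:
  assumes "orthon n A q" "finite A"
  shows "Re (ip n (\<lambda>i. \<Sum>a\<in>A. c a * q a i) (\<lambda>i. \<Sum>a\<in>A. c a * q a i)) = (\<Sum>a\<in>A. (cmod (c a))\<^sup>2)"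
proof -
  have "ip n (\<lambda>i. \<Sum>a\<in>A. c a * q a i) (\<lambda>i. \<Sum>a\<in>A. c a * q a i) = (\<Sum>a\<in>A. cnj (c a) * ip n (q a) (\<lambda>i. \<Sum>a\<in>A. c a * q a i))"
    by (rule ip_sum_left)
  also have "\<dots> = (\<Sum>a\<in>A. complex_of_real ((cmod (c a))\<^sup>2))"
    using orthon_ip_sum[OF assms] by (intro sum.cong) (auto simp: cnj_mult_self)
  finally show ?thesis by (simp add: Re_sum)
qed

lemma eig_from_decomp:
  assumes D: "decomp_ok n m H Q d" and a: "a < n"
  shows "mv n H (Q a) = (\<lambda>i. complex_of_real (d a) * Q a i)"
proof
  fix i show "mv n H (Q a) i = complex_of_real (d a) * Q a i"
  proof (cases "i < n")
    case True
    have o: "orthon n {..<n} Q" using D unfolding decomp_ok_def by simp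
    have "mv n H (Q a) i = (\<Sum>j<n. (\<Sum>b<n. Q b i * complex_of_real (d b) * cnj (Q b j)) * Q a j)"
      unfolding mv_def using True D unfolding decomp_ok_def by simp
    also have "\<dots> = (\<Sum>b<n. Q b i * complex_of_real (d b) * ip n (Q b) (Q a))"
      unfolding ip_def by (simp add: sum_distrib_left sum_distrib_right mult_ac, rule sum.swap)
    also have "\<dots> = (\<Sum>b<n. if b = a then Q a i * complex_of_real (d a) else 0)"
      using o a unfolding orthon_def by (intro sum.cong) auto
    also have "\<dots> = complex_of_real (d a) * Q a i" using a by simp
    finally show ?thesis .
  next
    case False
    have "inV n (Q a)" using D a unfolding decomp_ok_def orthon_def by auto
    then show ?thesis using False unfolding mv_def inV_def by simp
  qed
qed

lemma frob_slice:
  assumes D: "decomp_ok n m H Q d" and M: "\<forall>a<n. \<bar>d a\<bar> \<le> M"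
  shows "(\<Sum>i<n. \<Sum>i'<n. (cmod (H i i'))\<^sup>2) \<le> real m * M\<^sup>2"
proof -
  have o: "orthon n {..<n} Q" using D unfolding decomp_ok_def by simp
  have col: "(\<Sum>i<n. (cmod (H i i'))\<^sup>2) = (\<Sum>a<n. (d a)\<^sup>2 * (cmod (Q a i'))\<^sup>2)" if i': "i' < n" for i'
  proof -
    define v where "v = (\<lambda>i. \<Sum>a<n. (complex_of_real (d a) * cnj (Q a i')) * Q a i)"
    have "(\<Sum>i<n. (cmod (H i i'))\<^sup>2) = (\<Sum>i<n. (cmod (v i))\<^sup>2)"
    proof (intro sum.cong refl)
      fix i assume "i \<in> {..<n}"
      then have "H i i' = v i" using D i' unfolding decomp_ok_def v_def by (simp add: mult_ac)
      then show "(cmod (H i i'))\<^sup>2 = (cmod (v i))\<^sup>2" by simp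
    qed
    also have "\<dots> = Re (ip n v v)" by (rule ip_self_Re[symmetric])
    also have "\<dots> = (\<Sum>a<n. (cmod (complex_of_real (d a) * cnj (Q a i')))\<^sup>2)"
      unfolding v_def by (rule ip_expansion[OF o finite_lessThan])
    also have "\<dots> = (\<Sum>a<n. (d a)\<^sup>2 * (cmod (Q a i'))\<^sup>2)" by (simp add: norm_mult power_mult_distrib)
    finally show ?thesis .
  qed
  have "(\<Sum>i<n. \<Sum>i'<n. (cmod (H i i'))\<^sup>2) = (\<Sum>i'<n. \<Sum>i<n. (cmod (H i i'))\<^sup>2)" by (rule sum.swap)
  also have "\<dots> = (\<Sum>i'<n. \<Sum>a<n. (d a)\<^sup>2 * (cmod (Q a i'))\<^sup>2)" using col by simp
  also have "\<dots> = (\<Sum>a<n. (d a)\<^sup>2 * (\<Sum>i'<n. (cmod (Q a i'))\<^sup>2))" by (subst sum.swap) (simp add: sum_distrib_left)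
  also have "\<dots> = (\<Sum>a<n. (d a)\<^sup>2)"
  proof (intro sum.cong refl)
    fix a assume a: "a \<in> {..<n}"
    have "(\<Sum>i'<n. (cmod (Q a i'))\<^sup>2) = Re (ip n (Q a) (Q a))" by (rule ip_self_Re[symmetric])
    also have "\<dots> = 1" using o a unfolding orthon_def by simp
    finally show "(d a)\<^sup>2 * (\<Sum>i'<n. (cmod (Q a i'))\<^sup>2) = (d a)\<^sup>2" by simp
  qed
  also have "\<dots> \<le> (\<Sum>a<n. if a < m then M\<^sup>2 else 0)"
  proof (rule sum_mono)
    fix a assume a: "a \<in> {..<n}"
    show "(d a)\<^sup>2 \<le> (if a < m then M\<^sup>2 else 0)"
    proof (cases "a < m")
      case True
      have "\<bar>d a\<bar> \<le> M" using M a by simp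
      then have "\<bar>d a\<bar>\<^sup>2 \<le> M\<^sup>2" by (intro power_mono) auto
      then show ?thesis using True by simp
    next
      case False then show ?thesis using D unfolding decomp_ok_def by simp
    qed
  qed
  also have "\<dots> = real (card ({..<n} \<inter> {a. a < m})) * M\<^sup>2"
    by (simp add: sum.If_cases)
  also have "\<dots> \<le> real m * M\<^sup>2"
  proof -
    have "card ({..<n} \<inter> {a. a < m}) \<le> card {..<m}" by (intro card_mono) auto
    then show ?thesis by (intro mult_right_mono) auto
  qed
  finally show ?thesis .
qed

lemma frob_bound:
  assumes k: "k \<ge> 1" and Z: "Z \<in> tsym n k" and sv: "is_tsvd n k Z U S V"
    and r: "nonzero_tubes n k S \<le> r"
  shows "tinner n k Z Z \<le> real r * (spec_norm n k Z)\<^sup>2"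
proof -
  define T where "T = {t. t < n \<and> (\<exists>j<k. S t t j \<noteq> 0)}"
  have cT: "card T \<le> r" using r unfolding nonzero_tubes_def T_def .
  have slice: "(\<Sum>i<n. \<Sum>i'<n. (cmod (fslice k Z l i i'))\<^sup>2) \<le> real r * (spec_norm n k Z)\<^sup>2" if l: "l < k" for l
  proof -
    define f where "f = (\<lambda>t i. if i < n then fslice k U l i t else 0)"
    have R: "orthon n T f" "finite T" "\<forall>v. inV n v \<longrightarrow> (\<exists>c. mv n (fslice k Z l) v = (\<lambda>i. \<Sum>b\<in>T. c b * f b i))"
      using tsvd_range[OF k sv l] unfolding T_def f_def by auto
    obtain Q d where "orthon n {..<n} Q \<and> (\<forall>i<n. \<forall>j<n. (\<Sum>a<n. Q a i * cnj (Q a j)) = (if i = j then 1 else 0))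
       \<and> (\<forall>i<n. \<forall>j<n. fslice k Z l i j = (\<Sum>a<n. Q a i * complex_of_real (d a) * cnj (Q a j)))
       \<and> (\<forall>a. card T \<le> a \<longrightarrow> d a = 0) \<and> (False \<longrightarrow> (\<forall>a i. Im (Q a i) = 0))"
      using herm_decomp[OF herm_slice[OF k Z], where flag = False and I = T and f = f and m = "card T"] R by blast
    then have D: "decomp_ok n (card T) (fslice k Z l) Q d" unfolding decomp_ok_def by blast
    have M: "\<forall>a<n. \<bar>d a\<bar> \<le> spec_norm n k Z"
    proof (intro allI impI)
      fix a assume a: "a < n"
      have o: "orthon n {..<n} Q" using D unfolding decomp_ok_def by simp
      have inVa: "inV n (Q a)" using o a unfolding orthon_def by simp
      have one: "Re (ip n (Q a) (Q a)) = 1" using o a unfolding orthon_def by simp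
      have "Re (ip n (mv n (fslice k Z l) (Q a)) (mv n (fslice k Z l) (Q a))) = (d a)\<^sup>2"
        unfolding eig_from_decomp[OF D a] by (simp add: ip_scale_left ip_scale_right one power2_eq_square)
      then have "sqrt ((d a)\<^sup>2) \<le> spec_norm n k Z" using spec_lower[OF l inVa, of Z] one by simp
      then show "\<bar>d a\<bar> \<le> spec_norm n k Z" by simp
    qed
    have "(\<Sum>i<n. \<Sum>i'<n. (cmod (fslice k Z l i i'))\<^sup>2) \<le> real (card T) * (spec_norm n k Z)\<^sup>2"
      by (rule frob_slice[OF D M])
    also have "\<dots> \<le> real r * (spec_norm n k Z)\<^sup>2" using cT by (intro mult_right_mono) auto
    finally show ?thesis .
  qed
  have "tinner n k Z Z = (\<Sum>l<k. \<Sum>i<n. \<Sum>i'<n. (cmod (fslice k Z l i i'))\<^sup>2) / real k" by (rule parseval[OF k])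
  also have "\<dots> \<le> (\<Sum>l<k. real r * (spec_norm n k Z)\<^sup>2) / real k"
    using slice k by (intro divide_right_mono sum_mono) auto
  also have "\<dots> = real r * (spec_norm n k Z)\<^sup>2" using k by simp
  finally show ?thesis .
qed

lemma pos_small: fixes D C :: real assumes "\<forall>t>0. D \<le> t * C" shows "D \<le> 0"
proof (rule ccontr)
  assume "\<not> D \<le> 0"
  then have Dp: "D > 0" by simp
  define t where "t = D / (\<bar>C\<bar> + 1)"
  have tp: "t > 0" unfolding t_def using Dp by simp
  have "D \<le> t * C" using assms tp by blast
  also have "\<dots> \<le> t * \<bar>C\<bar>" using tp by (intro mult_left_mono) auto
  also have "\<dots> < D" unfolding t_def using Dp by (simp add: field_simps)
  finally show False by simp
qed

lemma polar:
  fixes ZZ YY ZY P z y \<delta> :: real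
  assumes ZZ: "ZZ \<ge> 0" and YY: "YY \<ge> 0" and d: "\<delta> \<ge> 0"
    and up: "\<And>a b. a\<^sup>2 * z + 2 * a * b * P + b\<^sup>2 * y \<le> (1 + \<delta>) * (a\<^sup>2 * ZZ + 2 * a * b * ZY + b\<^sup>2 * YY)"
    and lo: "\<And>a b. (1 - \<delta>) * (a\<^sup>2 * ZZ + 2 * a * b * ZY + b\<^sup>2 * YY) \<le> a\<^sup>2 * z + 2 * a * b * P + b\<^sup>2 * y"
  shows "\<bar>ZY - P\<bar> \<le> \<delta> * sqrt ZZ * sqrt YY"
proof -
  have key: "2 * (a * b) * \<bar>ZY - P\<bar> \<le> \<delta> * (a\<^sup>2 * ZZ + b\<^sup>2 * YY)" if ab: "a \<ge> 0" "b \<ge> 0" for a b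
  proof -
    have u1: "a\<^sup>2 * z + 2 * a * b * P + b\<^sup>2 * y \<le> (1 + \<delta>) * (a\<^sup>2 * ZZ + 2 * a * b * ZY + b\<^sup>2 * YY)" by (rule up)
    have l1: "(1 - \<delta>) * (a\<^sup>2 * ZZ + 2 * a * (-b) * ZY + (-b)\<^sup>2 * YY) \<le> a\<^sup>2 * z + 2 * a * (-b) * P + (-b)\<^sup>2 * y" by (rule lo)
    have u2: "a\<^sup>2 * z + 2 * a * (-b) * P + (-b)\<^sup>2 * y \<le> (1 + \<delta>) * (a\<^sup>2 * ZZ + 2 * a * (-b) * ZY + (-b)\<^sup>2 * YY)" by (rule up)
    have l2: "(1 - \<delta>) * (a\<^sup>2 * ZZ + 2 * a * b * ZY + b\<^sup>2 * YY) \<le> a\<^sup>2 * z + 2 * a * b * P + b\<^sup>2 * y" by (rule lo)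
    have "4 * (a * b) * (P - ZY) \<le> 2 * \<delta> * (a\<^sup>2 * ZZ + b\<^sup>2 * YY)"
      using u1 l1 by (simp add: algebra_simps power2_eq_square)
    moreover have "4 * (a * b) * (ZY - P) \<le> 2 * \<delta> * (a\<^sup>2 * ZZ + b\<^sup>2 * YY)"
      using u2 l2 by (simp add: algebra_simps power2_eq_square)
    ultimately show ?thesis by (simp add: abs_if algebra_simps)
  qed
  show ?thesis
  proof (cases "ZZ = 0")
    case True
    have "\<forall>t>0. \<bar>ZY - P\<bar> \<le> t * (\<delta> * YY / 2)"
    proof (intro allI impI)
      fix t :: real assume t: "t > 0"
      have "2 * (1 * t) * \<bar>ZY - P\<bar> \<le> \<delta> * (1\<^sup>2 * ZZ + t\<^sup>2 * YY)" using key[of 1 t] t by simp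
      then have "t * (2 * \<bar>ZY - P\<bar>) \<le> t * (t * (\<delta> * YY))" using True by (simp add: power2_eq_square algebra_simps)
      then have "2 * \<bar>ZY - P\<bar> \<le> t * (\<delta> * YY)" using t by simp
      then show "\<bar>ZY - P\<bar> \<le> t * (\<delta> * YY / 2)" by simp
    qed
    then have "\<bar>ZY - P\<bar> \<le> 0" by (rule pos_small)
    then show ?thesis using True by simp
  next
    case False
    show ?thesis
    proof (cases "YY = 0")
      case True
      have "\<forall>t>0. \<bar>ZY - P\<bar> \<le> t * (\<delta> * ZZ / 2)"
      proof (intro allI impI)
        fix t :: real assume t: "t > 0"
        have "2 * (t * 1) * \<bar>ZY - P\<bar> \<le> \<delta> * (t\<^sup>2 * ZZ + 1\<^sup>2 * YY)" using key[of t 1] t by simp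
        then have "t * (2 * \<bar>ZY - P\<bar>) \<le> t * (t * (\<delta> * ZZ))" using True by (simp add: power2_eq_square algebra_simps)
        then have "2 * \<bar>ZY - P\<bar> \<le> t * (\<delta> * ZZ)" using t by simp
        then show "\<bar>ZY - P\<bar> \<le> t * (\<delta> * ZZ / 2)" by simp
      qed
      then have "\<bar>ZY - P\<bar> \<le> 0" by (rule pos_small)
      then show ?thesis using True by simp
    next
      case F2: False
      define g where "g = sqrt YY * sqrt ZZ"
      have gp: "g > 0" unfolding g_def using ZZ YY False F2 by simp
      have "2 * g * \<bar>ZY - P\<bar> \<le> \<delta> * ((sqrt YY)\<^sup>2 * ZZ + (sqrt ZZ)\<^sup>2 * YY)"
        using key[of "sqrt YY" "sqrt ZZ"] ZZ YY unfolding g_def by simp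
      also have "\<dots> = 2 * g * (\<delta> * g)" unfolding g_def using ZZ YY by (simp add: power2_eq_square algebra_simps)
      finally have "\<bar>ZY - P\<bar> \<le> \<delta> * g" using gp by simp
      then show ?thesis unfolding g_def by (simp add: mult_ac)
    qed
  qed
qed

lemma tsym_iff: "X \<in> tsym n k \<longleftrightarrow> valid_tensor n k X \<and>
   (\<forall>i i' j. i < n \<and> i' < n \<and> j < k \<longrightarrow> X i' i ((k - j) mod k) = X i i' j)"
proof
  assume X: "X \<in> tsym n k"
  then have v: "valid_tensor n k X" and t: "ttrans n k X = X" unfolding tsym_def by auto
  have "X i' i ((k - j) mod k) = X i i' j" if "i < n \<and> i' < n \<and> j < k" for i i' j
    using fun_cong[OF fun_cong[OF fun_cong[OF t, of i], of i'], of j] that unfolding ttrans_def by simp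
  then show "valid_tensor n k X \<and> (\<forall>i i' j. i < n \<and> i' < n \<and> j < k \<longrightarrow> X i' i ((k - j) mod k) = X i i' j)"
    using v by blast
next
  assume a: "valid_tensor n k X \<and> (\<forall>i i' j. i < n \<and> i' < n \<and> j < k \<longrightarrow> X i' i ((k - j) mod k) = X i i' j)"
  have "ttrans n k X = X"
  proof (intro ext)
    fix i i' j show "ttrans n k X i i' j = X i i' j"
      using a unfolding ttrans_def valid_tensor_def by auto
  qed
  then show "X \<in> tsym n k" using a unfolding tsym_def by simp
qed

lemma tsym_lin: assumes "X \<in> tsym n k" "Y \<in> tsym n k"
  shows "(\<lambda>a b c. \<alpha> * X a b c + \<beta> * Y a b c) \<in> tsym n k"
  using assms unfolding tsym_iff valid_tensor_def by auto

lemma tsym_sum: assumes "\<forall>i<m. A i \<in> tsym n k"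
  shows "(\<lambda>a b c. \<Sum>i<m. z i * A i a b c) \<in> tsym n k"
  unfolding tsym_iff
proof (intro conjI allI impI)
  show "valid_tensor n k (\<lambda>a b c. \<Sum>i<m. z i * A i a b c)"
    using assms unfolding tsym_iff valid_tensor_def by auto
  fix i i' j assume r: "i < n \<and> i' < n \<and> j < k"
  show "(\<Sum>ia<m. z ia * A ia i' i ((k - j) mod k)) = (\<Sum>ia<m. z ia * A ia i i' j)"
    using assms r unfolding tsym_iff by (intro sum.cong) auto
qed

lemma tinner_lin_right: "tinner n k A (\<lambda>a b c. \<alpha> * X a b c + \<beta> * Y a b c) = \<alpha> * tinner n k A X + \<beta> * tinner n k A Y"
  unfolding tinner_def by (simp add: algebra_simps sum.distrib sum_distrib_left)

lemma tinner_sym: "tinner n k A B = tinner n k B A"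
  unfolding tinner_def by (simp add: mult.commute)

lemma tinner_nonneg: "tinner n k A A \<ge> 0"
  unfolding tinner_def by (intro sum_nonneg) auto

lemma tinner_quad: "tinner n k (\<lambda>a b c. \<alpha> * X a b c + \<beta> * Y a b c) (\<lambda>a b c. \<alpha> * X a b c + \<beta> * Y a b c)
   = \<alpha>\<^sup>2 * tinner n k X X + 2 * \<alpha> * \<beta> * tinner n k X Y + \<beta>\<^sup>2 * tinner n k Y Y"
proof -
  have "tinner n k (\<lambda>a b c. \<alpha> * X a b c + \<beta> * Y a b c) (\<lambda>a b c. \<alpha> * X a b c + \<beta> * Y a b c)
     = \<alpha> * tinner n k (\<lambda>a b c. \<alpha> * X a b c + \<beta> * Y a b c) X + \<beta> * tinner n k (\<lambda>a b c. \<alpha> * X a b c + \<beta> * Y a b c) Y"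
    by (rule tinner_lin_right)
  also have "tinner n k (\<lambda>a b c. \<alpha> * X a b c + \<beta> * Y a b c) X = \<alpha> * tinner n k X X + \<beta> * tinner n k X Y"
    by (subst tinner_sym, subst tinner_lin_right) (simp add: tinner_sym)
  also have "tinner n k (\<lambda>a b c. \<alpha> * X a b c + \<beta> * Y a b c) Y = \<alpha> * tinner n k X Y + \<beta> * tinner n k Y Y"
    by (subst tinner_sym, subst tinner_lin_right) (simp add: tinner_sym)
  finally show ?thesis by (simp add: power2_eq_square algebra_simps)
qed

lemma meas_quad:
  "(\<Sum>i<m. (meas n k m A (\<lambda>a b c. \<alpha> * X a b c + \<beta> * Y a b c) i)\<^sup>2)
   = \<alpha>\<^sup>2 * (\<Sum>i<m. (meas n k m A X i)\<^sup>2) + 2 * \<alpha> * \<beta> * (\<Sum>i<m. meas n k m A X i * meas n k m A Y i)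
     + \<beta>\<^sup>2 * (\<Sum>i<m. (meas n k m A Y i)\<^sup>2)"
proof -
  have "(\<Sum>i<m. (meas n k m A (\<lambda>a b c. \<alpha> * X a b c + \<beta> * Y a b c) i)\<^sup>2)
      = (\<Sum>i<m. (\<alpha> * meas n k m A X i + \<beta> * meas n k m A Y i)\<^sup>2)"
    unfolding meas_def by (intro sum.cong) (auto simp: tinner_lin_right)
  also have "\<dots> = \<alpha>\<^sup>2 * (\<Sum>i<m. (meas n k m A X i)\<^sup>2) + 2 * \<alpha> * \<beta> * (\<Sum>i<m. meas n k m A X i * meas n k m A Y i)
     + \<beta>\<^sup>2 * (\<Sum>i<m. (meas n k m A Y i)\<^sup>2)"
    by (simp add: power2_eq_square algebra_simps sum.distrib sum_distrib_left)
  finally show ?thesis .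
qed

lemma fro_sq: "(fro_norm n k X)\<^sup>2 = tinner n k X X"
  unfolding fro_norm_def using tinner_nonneg by simp

lemma tinner_W:
  "tinner n k (\<lambda>a b c. Z a b c - meas_adj m A (meas n k m A Z) a b c) Y
   = tinner n k Z Y - (\<Sum>i<m. meas n k m A Z i * meas n k m A Y i)"
proof -
  have "tinner n k (\<lambda>a b c. Z a b c - meas_adj m A (meas n k m A Z) a b c) Y
     = tinner n k Z Y - (\<Sum>i<m. meas n k m A Z i * tinner n k (A i) Y)"
    unfolding tinner_def meas_adj_def
    by (simp add: algebra_simps sum_subtractf sum_distrib_left sum_distrib_right, subst (2) sum.swap,
        subst (3) sum.swap, subst (2) sum.swap, simp add: mult_ac)
  also have "(\<Sum>i<m. meas n k m A Z i * tinner n k (A i) Y) = (\<Sum>i<m. meas n k m A Z i * meas n k m A Y i)"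
    unfolding meas_def by (intro sum.cong) auto
  finally show ?thesis .
qed

lemma spec_nonneg: assumes k: "k \<ge> 1" shows "spec_norm n k W \<ge> 0"
proof -
  have "sqrt (Re (ip n (mv n (fslice k W 0) (\<lambda>i. 0)) (mv n (fslice k W 0) (\<lambda>i. 0)))) \<le> spec_norm n k W"
    by (rule spec_lower) (use k in \<open>auto simp: inV_def ip_def\<close>)
  then show ?thesis by (metis real_sqrt_ge_zero ip_self_nonneg order_trans)
qed

theorem lemma19:
  fixes n k m r :: nat and A :: "nat \<Rightarrow> tensor" and \<delta>1 :: real
  assumes "n \<ge> 1" and "k \<ge> 1"
    and "\<forall>i<m. A i \<in> tsym n k"
    and "RIP n k m A (r + 1) \<delta>1"
    and "0 < \<delta>1" and "\<delta>1 < 1"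
  shows "S2SRIP n k m A r (sqrt (real k * real r) * \<delta>1)"
  unfolding S2SRIP_def
proof (intro ballI impI)
  note k = assms(2)
  have Asym: "\<forall>i<m. A i \<in> tsym n k" by (rule assms(3))
  have rip: "\<And>X. X \<in> tsym n k \<Longrightarrow> tubal_rank n k X \<le> r + 1 \<Longrightarrow>
      (1 - \<delta>1) * tinner n k X X \<le> (\<Sum>i<m. (meas n k m A X i)\<^sup>2) \<and>
      (\<Sum>i<m. (meas n k m A X i)\<^sup>2) \<le> (1 + \<delta>1) * tinner n k X X"
    using assms(4) unfolding RIP_def fro_sq by blast
  fix Z assume Z: "Z \<in> tsym n k" and rZ: "tubal_rank n k Z \<le> r"
  obtain U S V where sv: "is_tsvd n k Z U S V" and nzS: "nonzero_tubes n k S = tubal_rank n k Z"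
    using tubal_rank_tsvd[OF k Z] by blast
  define T where "T = {t. t < n \<and> (\<exists>j<k. S t t j \<noteq> 0)}"
  have cT: "card T \<le> r" using nzS rZ unfolding nonzero_tubes_def T_def by simp
  define W where "W = (\<lambda>a b c. Z a b c - meas_adj m A (meas n k m A Z) a b c)"
  have Wsym: "W \<in> tsym n k"
  proof -
    have "(\<lambda>a b c. 1 * Z a b c + (-1) * (\<Sum>i<m. meas n k m A Z i * A i a b c)) \<in> tsym n k"
      by (rule tsym_lin[OF Z tsym_sum[OF Asym]])
    moreover have "(\<lambda>a b c. 1 * Z a b c + (-1) * (\<Sum>i<m. meas n k m A Z i * A i a b c)) = W"
      unfolding W_def meas_adj_def by simp
    ultimately show ?thesis by simp
  qed
  define ZZ where "ZZ = tinner n k Z Z"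
  have ZZ0: "ZZ \<ge> 0" unfolding ZZ_def by (rule tinner_nonneg)
  define B0 where "B0 = \<delta>1 * sqrt ZZ * sqrt (real k)"
  have B0: "B0 \<ge> 0" unfolding B0_def using assms(5) ZZ0 by simp
  have Q: "\<bar>Re (ip n u (mv n (fslice k W l0) u))\<bar> \<le> B0 * Re (ip n u u)"
    if l0: "l0 < k" and u: "inV n u" and ur: "(k - l0) mod k = l0 \<Longrightarrow> \<forall>i. Im (u i) = 0" for l0 u
  proof -
    define Y where "Y = ytest n k l0 u"
    have Ysym: "Y \<in> tsym n k" unfolding Y_def by (rule ytest_sym[OF k])
    have rk: "tubal_rank n k (\<lambda>i i' j. a * Z i i' j + b * Y i i' j) \<le> r + 1" for a b
    proof -
      have "tubal_rank n k (\<lambda>i i' j. a * Z i i' j + b * Y i i' j) \<le> card T + 1"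
        unfolding Y_def
      proof (rule tubal_rank_le[OF k])
        show "(\<lambda>i i' j. a * Z i i' j + b * ytest n k l0 u i i' j) \<in> tsym n k"
          using tsym_lin[OF Z Ysym] unfolding Y_def .
        show "\<forall>l<k. \<exists>I f. orthon n I f \<and> finite I \<and> card I \<le> card T + 1 \<and>
          (\<forall>v. inV n v \<longrightarrow> (\<exists>c. mv n (fslice k (\<lambda>i i' j. a * Z i i' j + b * ytest n k l0 u i i' j) l) v = (\<lambda>i. \<Sum>b\<in>I. c b * f b i)))"
          using gen_comb[OF k sv l0 u ur] unfolding T_def by blast
      qed
      then show ?thesis using cT by simp
    qed
    define YY where "YY = tinner n k Y Y"
    define ZY where "ZY = tinner n k Z Y"
    define P where "P = (\<Sum>i<m. meas n k m A Z i * meas n k m A Y i)"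
    have YY0: "YY \<ge> 0" unfolding YY_def by (rule tinner_nonneg)
    have pol: "\<bar>ZY - P\<bar> \<le> \<delta>1 * sqrt ZZ * sqrt YY"
    proof (rule polar[OF ZZ0 YY0])
      show "\<delta>1 \<ge> 0" using assms(5) by simp
      fix a b :: real
      have R: "(1 - \<delta>1) * tinner n k (\<lambda>i i' j. a * Z i i' j + b * Y i i' j) (\<lambda>i i' j. a * Z i i' j + b * Y i i' j)
          \<le> (\<Sum>i<m. (meas n k m A (\<lambda>i i' j. a * Z i i' j + b * Y i i' j) i)\<^sup>2) \<and>
          (\<Sum>i<m. (meas n k m A (\<lambda>i i' j. a * Z i i' j + b * Y i i' j) i)\<^sup>2)
          \<le> (1 + \<delta>1) * tinner n k (\<lambda>i i' j. a * Z i i' j + b * Y i i' j) (\<lambda>i i' j. a * Z i i' j + b * Y i i' j)"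
        by (rule rip[OF tsym_lin[OF Z Ysym] rk])
      then show "a\<^sup>2 * (\<Sum>i<m. (meas n k m A Z i)\<^sup>2) + 2 * a * b * P + b\<^sup>2 * (\<Sum>i<m. (meas n k m A Y i)\<^sup>2)
          \<le> (1 + \<delta>1) * (a\<^sup>2 * ZZ + 2 * a * b * ZY + b\<^sup>2 * YY)"
        and "(1 - \<delta>1) * (a\<^sup>2 * ZZ + 2 * a * b * ZY + b\<^sup>2 * YY)
          \<le> a\<^sup>2 * (\<Sum>i<m. (meas n k m A Z i)\<^sup>2) + 2 * a * b * P + b\<^sup>2 * (\<Sum>i<m. (meas n k m A Y i)\<^sup>2)"
        unfolding tinner_quad meas_quad ZZ_def ZY_def YY_def P_def by auto
    qed
    have "tinner n k W Y = ZY - P" unfolding W_def ZY_def P_def by (rule tinner_W)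
    moreover have "tinner n k W Y = Re (ip n u (mv n (fslice k W l0) u))" unfolding Y_def by (rule ytest_inner[OF k])
    moreover have "sqrt YY \<le> sqrt (real k) * Re (ip n u u)"
    proof -
      have "YY \<le> real k * (Re (ip n u u))\<^sup>2" unfolding YY_def Y_def by (rule ytest_norm[OF k])
      then have "sqrt YY \<le> sqrt (real k * (Re (ip n u u))\<^sup>2)" by (rule real_sqrt_le_mono)
      also have "\<dots> = sqrt (real k) * Re (ip n u u)" using ip_self_nonneg[of n u] by (simp add: real_sqrt_mult)
      finally show ?thesis .
    qed
    ultimately have "\<bar>Re (ip n u (mv n (fslice k W l0) u))\<bar> \<le> \<delta>1 * sqrt ZZ * (sqrt (real k) * Re (ip n u u))"
      using pol assms(5) ZZ0 by (smt (verit) mult_left_mono real_sqrt_ge_zero zero_le_mult_iff)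
    then show ?thesis unfolding B0_def by (simp add: mult_ac)
  qed
  have slice_bound: "\<forall>y. inV n y \<longrightarrow> Re (ip n (mv n (fslice k W l) y) (mv n (fslice k W l) y)) \<le> B0\<^sup>2 * Re (ip n y y)"
    if l: "l < k" for l
  proof (intro allI impI)
    fix y assume y: "inV n y"
    have Qall: "\<forall>y. inV n y \<longrightarrow> \<bar>Re (ip n y (mv n (fslice k W l) y))\<bar> \<le> B0 * Re (ip n y y)"
    proof (cases "(k - l) mod k = l")
      case True
      have Hr: "\<forall>i<n. \<forall>j<n. Im (fslice k W l i j) = 0" using real_slice[OF k l True] by blast
      have QR: "\<forall>y. inV n y \<and> (\<forall>i. Im (y i) = 0) \<longrightarrow> \<bar>Re (ip n y (mv n (fslice k W l) y))\<bar> \<le> B0 * Re (ip n y y)"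
        using Q[OF l] by blast
      show ?thesis using real_quad_ext[OF Hr QR] by blast
    next
      case False
      then show ?thesis using Q[OF l] by blast
    qed
    show "Re (ip n (mv n (fslice k W l) y) (mv n (fslice k W l) y)) \<le> B0\<^sup>2 * Re (ip n y y)"
      by (rule quad_to_norm[OF herm_slice[OF k Wsym] B0 Qall y])
  qed
  have "spec_norm n k W \<le> B0" by (rule spec_upper[OF B0]) (use slice_bound in blast)
  also have "B0 \<le> sqrt (real k * real r) * \<delta>1 * spec_norm n k Z"
  proof -
    have "ZZ \<le> real r * (spec_norm n k Z)\<^sup>2" unfolding ZZ_def
      by (rule frob_bound[OF k Z sv]) (use nzS rZ in simp)
    then have "sqrt ZZ \<le> sqrt (real r * (spec_norm n k Z)\<^sup>2)" by (rule real_sqrt_le_mono)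
    also have "\<dots> = sqrt (real r) * spec_norm n k Z" using spec_nonneg[OF k, of n Z] by (simp add: real_sqrt_mult)
    finally have "sqrt ZZ \<le> sqrt (real r) * spec_norm n k Z" .
    then have "\<delta>1 * sqrt ZZ * sqrt (real k) \<le> \<delta>1 * (sqrt (real r) * spec_norm n k Z) * sqrt (real k)"
      using assms(5) by (intro mult_right_mono mult_left_mono) auto
    then show ?thesis unfolding B0_def by (simp add: real_sqrt_mult mult_ac)
  qed
  finally show "spec_norm n k W \<le> sqrt (real k * real r) * \<delta>1 * spec_norm n k Z" .
qed

end
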